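(* Let $\mathcal{A}$ be a finite abelian group, $\mathbb{M}$ a countable monoid, $\mathfrak{F}:\mathcal{A}^{\mathbb{M}}\to\mathcal{A}^{\mathbb{M}}$ a linear cellular automaton, and $\mu$ a harmonically mixing probability measure on $\mathcal{A}^{\mathbb{M}}$. (1) If $\mathfrak{F}$ is diffusive, then $\mathfrak{F}^j\mu\to\eta$ in the weak* topology as $j\to\infty$. (2) If $\mathfrak{F}$ is diffusive in density, then there is a set $J\subset\mathbb{N}$ of Cesàro density $1$ such that $\mathfrak{F}^j\mu\to\eta$ weak* as $j\to\infty$, $j\in J$; consequently $\frac1N\sum_{n=1}^N\mathfrak{F}^n\mu\to\eta$ weak*.
   Context: $\eta$ denotes the Haar measure on the compact group $\mathcal{A}^{\mathbb{M}}$ (product of uniform measures). $\mathfrak{F}^j\mu=\mu\circ\mathfrak{F}^{-j}$. An LCA is a continuous group endomorphism commuting with all shifts $\sigma^e$, $(\sigma^e\mathbf{a})_m=a_{e.m}$. Characters of $\mathcal{A}^{\mathbb{M}}$ are $\chi=\bigotimes_m\chi_m$, $\chi_m$ characters of $\mathcal{A}$, all but finitely many trivial; rank$(\chi)$ is the number of nontrivial $\chi_m$. $\mu$ is harmonically mixing if for every $\varepsilon>0$ there is $R$ with rank$(\chi)>R\Rightarrow|\int\chi\,d\mu|<\varepsilon$. $\mathfrak{F}$ is diffusive if for every nontrivial character $\chi$, rank$(\chi\circ\mathfrak{F}^n)\to\infty$ as $n\to\infty$; it is diffusive in density if for every nontrivial character $\chi$ there is $J_\chi\subset\mathbb{N}$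 of Cesàro density 1 (i.e. $|J_\chi\cap[1,N]|/N\to1$) with rank$(\chi\circ\mathfrak{F}^j)\to\infty$ as $j\to\infty$, $j\in J_\chi$. *)

theory Defs
  imports "HOL-Probability.Probability"
begin

definition cfg_topology :: "('m \<Rightarrow> 'a) topology" where
  "cfg_topology = product_topology (\<lambda>_. discrete_topology UNIV) UNIV"

definition cfg_space :: "('m \<Rightarrow> 'a) measure" where
  "cfg_space = PiM UNIV (\<lambda>_. count_space UNIV)"

definition haar :: "('m \<Rightarrow> 'a::finite) measure" where
  "haar = PiM UNIV (\<lambda>_. uniform_count_measure UNIV)"

definition shift :: "'m::monoid_mult \<Rightarrow> ('m \<Rightarrow> 'a) \<Rightarrow> ('m \<Rightarrow> 'a)" where
  "shift e x = (\<lambda>m. x (e * m))"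

definition is_LCA :: "(('m::monoid_mult \<Rightarrow> 'a::ab_group_add) \<Rightarrow> ('m \<Rightarrow> 'a)) \<Rightarrow> bool" where
  "is_LCA F \<longleftrightarrow>
     continuous_map cfg_topology cfg_topology F \<and>
     (\<forall>x y. F (\<lambda>m. x m + y m) = (\<lambda>m. F x m + F y m)) \<and>
     (\<forall>e x. F (shift e x) = shift e (F x))"

definition group_char :: "('a::ab_group_add \<Rightarrow> complex) \<Rightarrow> bool" where
  "group_char ch \<longleftrightarrow> (\<forall>x y. ch (x + y) = ch x * ch y) \<and> (\<forall>x. norm (ch x) = 1)"

definition char_supp :: "('m \<Rightarrow> 'a \<Rightarrow> complex) \<Rightarrow> 'm set" where
  "char_supp c = {m. c m \<noteq> (\<lambda>_. 1)}"

definition char_family :: "('m \<Rightarrow> 'a::ab_group_add \<Rightarrow> complex) \<Rightarrow> bool" where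
  "char_family c \<longleftrightarrow> (\<forall>m. group_char (c m)) \<and> finite (char_supp c)"

definition prod_char :: "('m \<Rightarrow> 'a \<Rightarrow> complex) \<Rightarrow> ('m \<Rightarrow> 'a) \<Rightarrow> complex" where
  "prod_char c x = (\<Prod>m\<in>char_supp c. c m (x m))"

definition characters :: "(('m \<Rightarrow> 'a::ab_group_add) \<Rightarrow> complex) set" where
  "characters = {prod_char c | c. char_family c}"

text \<open>Rank: number of nontrivial factors of the (unique) tensor decomposition.\<close>
definition char_rank :: "(('m \<Rightarrow> 'a::ab_group_add) \<Rightarrow> complex) \<Rightarrow> nat" where
  "char_rank ch = card (char_supp (THE c. char_family c \<and> prod_char c = ch))"

definition harmonically_mixing :: "('m \<Rightarrow> 'a::ab_group_add) measure \<Rightarrow> bool" where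
  "harmonically_mixing \<mu> \<longleftrightarrow>
     (\<forall>eps>0. \<exists>R. \<forall>ch\<in>characters. char_rank ch > R \<longrightarrow> norm (LINT x|\<mu>. ch x) < eps)"

definition diffusive :: "(('m \<Rightarrow> 'a::ab_group_add) \<Rightarrow> ('m \<Rightarrow> 'a)) \<Rightarrow> bool" where
  "diffusive F \<longleftrightarrow>
     (\<forall>ch\<in>characters. ch \<noteq> (\<lambda>_. 1) \<longrightarrow>
        filterlim (\<lambda>n. char_rank (ch \<circ> (F ^^ n))) at_top sequentially)"

definition density_one :: "nat set \<Rightarrow> bool" where
  "density_one J \<longleftrightarrow> (\<lambda>N. real (card (J \<inter> {1..N})) / real N) \<longlonglongrightarrow> 1"

definition diffusive_in_density :: "(('m \<Rightarrow> 'a::ab_group_add) \<Rightarrow> ('m \<Rightarrow> 'a)) \<Rightarrow> bool" where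
  "diffusive_in_density F \<longleftrightarrow>
     (\<forall>ch\<in>characters. ch \<noteq> (\<lambda>_. 1) \<longrightarrow>
        (\<exists>J. density_one J \<and>
           filterlim (\<lambda>j. char_rank (ch \<circ> (F ^^ j))) at_top (sequentially \<sqinter> principal J)))"

definition weak_star_conv ::
  "('i \<Rightarrow> ('m \<Rightarrow> 'a) measure) \<Rightarrow> ('m \<Rightarrow> 'a) measure \<Rightarrow> 'i filter \<Rightarrow> bool" where
  "weak_star_conv \<mu>s \<nu> G \<longleftrightarrow>
     (\<forall>f. continuous_map cfg_topology euclideanreal f \<longrightarrow>
        ((\<lambda>i. integral\<^sup>L (\<mu>s i) f) \<longlongrightarrow> integral\<^sup>L \<nu> f) G)"

definition push :: "(('m \<Rightarrow> 'a) \<Rightarrow> ('m \<Rightarrow> 'a)) \<Rightarrow> nat \<Rightarrow> ('m \<Rightarrow> 'a) measure \<Rightarrow> ('m \<Rightarrow> 'a) measure" where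
  "push F j \<mu> = distr \<mu> cfg_space (F ^^ j)"

end

theory Submission
  imports Defs
begin
primrec nsm :: "nat \<Rightarrow> 'a::ab_group_add \<Rightarrow> 'a" where
  "nsm 0 g = 0"
| "nsm (Suc k) g = g + nsm k g"

lemma nsm_add: "nsm (i + j) g = nsm i g + nsm j g"
  by (induction i) (auto simp: add.assoc)

lemma nsm_mult: "nsm (i * j) g = nsm i (nsm j g)"
  by (induction i) (auto simp: nsm_add)

lemma nsm_zero: "nsm k (0::'a::ab_group_add) = 0"
  by (induction k) auto

definition subgrp :: "'a::ab_group_add set \<Rightarrow> bool" where
  "subgrp H \<longleftrightarrow> 0 \<in> H \<and> (\<forall>x\<in>H. \<forall>y\<in>H. x + y \<in> H) \<and> (\<forall>x\<in>H. - x \<in> H)"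

definition hchar :: "'a::ab_group_add set \<Rightarrow> ('a \<Rightarrow> complex) \<Rightarrow> bool" where
  "hchar H \<phi> \<longleftrightarrow> (\<forall>x\<in>H. \<forall>y\<in>H. \<phi> (x + y) = \<phi> x * \<phi> y) \<and> (\<forall>x\<in>H. norm (\<phi> x) = 1)"

lemma subgrp_nsm: "subgrp H \<Longrightarrow> y \<in> H \<Longrightarrow> nsm k y \<in> H"
  by (induction k) (auto simp: subgrp_def)

lemma subgrp_diff: "subgrp H \<Longrightarrow> x \<in> H \<Longrightarrow> y \<in> H \<Longrightarrow> x - y \<in> H"
  unfolding subgrp_def by (metis diff_conv_add_uminus)

lemma hchar_nsm: "subgrp H \<Longrightarrow> hchar H \<phi> \<Longrightarrow> y \<in> H \<Longrightarrow> \<phi> (nsm k y) = \<phi> y ^ k"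
proof (induction k)
  case 0
  have "\<phi> (0 + 0) = \<phi> 0 * \<phi> 0" using 0 by (auto simp: hchar_def subgrp_def)
  moreover have "norm (\<phi> 0) = 1" using 0 by (auto simp: hchar_def subgrp_def)
  ultimately have "\<phi> 0 * \<phi> 0 = \<phi> 0 * 1" "\<phi> 0 \<noteq> 0" by auto
  then show ?case by (metis mult_left_cancel nsm.simps(1) power_0)
next
  case (Suc k)
  then show ?case using subgrp_nsm[of H y k] by (auto simp: hchar_def)
qed

lemma finite_order:
  fixes g :: "'a::{ab_group_add,finite}"
  shows "\<exists>d>0. nsm d g = 0"
proof -
  have "\<not> inj (\<lambda>k::nat. nsm k g)"
  proof
    assume "inj (\<lambda>k::nat. nsm k g)"
    moreover have "finite (range (\<lambda>k::nat. nsm k g))" by simp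
    ultimately have "finite (UNIV::nat set)"
      using finite_imageD[of "\<lambda>k::nat. nsm k g" UNIV] by blast
    then show False by simp
  qed
  then obtain i j where ij: "i \<noteq> j" "nsm i g = nsm j g" unfolding inj_def by blast
  show ?thesis
  proof (cases "i < j")
    case True
    have "nsm j g = nsm i g + nsm (j - i) g" using True nsm_add[of i "j-i" g] by simp
    then show ?thesis using ij True by (intro exI[of _ "j-i"]) auto
  next
    case False
    then have "j < i" using ij by simp
    have "nsm i g = nsm j g + nsm (i - j) g" using \<open>j<i\<close> nsm_add[of j "i-j" g] by simp
    then show ?thesis using ij \<open>j<i\<close> by (intro exI[of _ "i-j"]) auto
  qed
qed

lemma nsm_neg:
  fixes g :: "'a::{ab_group_add,finite}"
  shows "\<exists>k'. - nsm k g = nsm k' g"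
proof -
  obtain d where d: "d > 0" "nsm d g = 0" using finite_order by blast
  have kd: "k * d = k + k * (d - 1)" using d(1) by (cases d) auto
  have "nsm k g + nsm (k * (d - 1)) g = nsm (k * d) g"
    by (simp only: kd nsm_add)
  also have "\<dots> = 0" by (simp only: nsm_mult d(2) nsm_zero)
  finally have "- nsm k g = nsm (k * (d - 1)) g" by (rule minus_unique)
  then show ?thesis by blast
qed

definition ext_set :: "'a::ab_group_add set \<Rightarrow> 'a \<Rightarrow> 'a set" where
  "ext_set H g = {h + nsm k g | h k. h \<in> H}"

lemma subgrp_ext_set:
  fixes g :: "'a::{ab_group_add,finite}"
  assumes "subgrp H" shows "subgrp (ext_set H g)"
  unfolding subgrp_def ext_set_def
proof (intro conjI ballI)
  show "0 \<in> {h + nsm k g |h k. h \<in> H}" using assms by (auto simp: subgrp_def intro!: exI[of _ 0])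
next
  fix x y assume "x \<in> {h + nsm k g |h k. h \<in> H}" "y \<in> {h + nsm k g |h k. h \<in> H}"
  then obtain h1 k1 h2 k2 where "x = h1 + nsm k1 g" "y = h2 + nsm k2 g" "h1 \<in> H" "h2 \<in> H" by auto
  then show "x + y \<in> {h + nsm k g |h k. h \<in> H}" using assms
    by (auto simp: subgrp_def nsm_add algebra_simps intro!: exI[of _ "h1+h2"] exI[of _ "k1+k2"])
next
  fix x assume "x \<in> {h + nsm k g |h k. h \<in> H}"
  then obtain h1 k1 where "x = h1 + nsm k1 g" "h1 \<in> H" by auto
  moreover obtain k' where "- nsm k1 g = nsm k' g" using nsm_neg by blast
  ultimately show "- x \<in> {h + nsm k g |h k. h \<in> H}" using assms
    by (auto simp: subgrp_def algebra_simps intro!: exI[of _ "-h1"] exI[of _ "k'"])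
qed

lemma step_ext:
  fixes g :: "'a::{ab_group_add,finite}"
  assumes H: "subgrp H" and chi: "hchar H \<phi>" and g: "g \<notin> H"
  defines "n \<equiv> LEAST n. n > 0 \<and> nsm n g \<in> H"
  assumes w: "w ^ n = \<phi> (nsm n g)"
  shows "n > 0 \<and> nsm n g \<in> H \<and> (\<exists>\<psi>. hchar (ext_set H g) \<psi> \<and> (\<forall>x\<in>H. \<psi> x = \<phi> x) \<and> \<psi> g = w)"
proof -
  obtain d where d: "d > 0" "nsm d g = 0" using finite_order by blast
  have ex: "\<exists>n. n > 0 \<and> nsm n g \<in> H" using d H by (auto simp: subgrp_def)
  have n: "n > 0" "nsm n g \<in> H" using LeastI_ex[OF ex] unfolding n_def by auto
  have nmin: "\<And>r. 0 < r \<Longrightarrow> r < n \<Longrightarrow> nsm r g \<notin> H" using not_less_Least unfolding n_def by blast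
  have dvd: "n dvd k" if "nsm k g \<in> H" for k
  proof -
    have "nsm k g = nsm ((k div n) * n + k mod n) g" by simp
    also have "\<dots> = nsm (k div n) (nsm n g) + nsm (k mod n) g"
      by (simp only: nsm_add nsm_mult)
    finally have "nsm k g = nsm (k div n) (nsm n g) + nsm (k mod n) g" .
    then have "nsm (k mod n) g = nsm k g - nsm (k div n) (nsm n g)" by (simp add: algebra_simps)
    also have "\<dots> \<in> H" using that subgrp_nsm[OF H n(2)] subgrp_diff[OF H] by blast
    finally have "k mod n = 0" using nmin[of "k mod n"] n(1) by (meson mod_less_divisor not_gr_zero)
    then show ?thesis by auto
  qed
  have normw: "norm w = 1"
  proof -
    have "norm w ^ n = 1" using w chi n(2) by (simp add: hchar_def norm_power[symmetric])
    then show ?thesis using n(1) by (metis norm_ge_zero power_eq_iff_eq_base power_one zero_le_one)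
  qed
  have wd0: "\<phi> h * w ^ k = \<phi> h' * w ^ k'"
    if "h \<in> H" "h' \<in> H" "h + nsm k g = h' + nsm k' g" "k \<le> k'" for h h' k k'
  proof -
    have "nsm k' g = nsm k g + nsm (k' - k) g" using that(4) by (simp flip: nsm_add)
    then have "nsm (k' - k) g = h - h'" using that(3) by (simp add: algebra_simps)
    then have "nsm (k' - k) g \<in> H" using subgrp_diff[OF H that(1,2)] by simp
    then obtain q where q: "k' - k = n * q" using dvd by blast
    have "nsm (k' - k) g = nsm (q * n) g" using q by (simp add: mult.commute)
    also have "\<dots> = nsm q (nsm n g)" by (rule nsm_mult)
    finally have hh: "h = h' + nsm q (nsm n g)" using \<open>nsm (k' - k) g = h - h'\<close> by (simp add: algebra_simps)
    have mem: "nsm q (nsm n g) \<in> H" using subgrp_nsm[OF H n(2)] by blast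
    have "\<phi> h = \<phi> h' * \<phi> (nsm q (nsm n g))"
      using chi that(2) mem hh unfolding hchar_def by blast
    also have "\<phi> (nsm q (nsm n g)) = \<phi> (nsm n g) ^ q" using hchar_nsm[OF H chi n(2)] by blast
    also have "\<phi> (nsm n g) ^ q = w ^ (n * q)" by (simp add: w power_mult)
    finally have "\<phi> h = \<phi> h' * w ^ (n * q)" .
    then have "\<phi> h * w ^ k = \<phi> h' * w ^ (n * q + k)" by (simp add: power_add)
    also have "n * q + k = k'" using q that(4) by simp
    finally show ?thesis .
  qed
  have wd: "\<phi> h * w ^ k = \<phi> h' * w ^ k'"
    if "h \<in> H" "h' \<in> H" "h + nsm k g = h' + nsm k' g" for h h' k k'
    using wd0[OF that] wd0[OF that(2,1) that(3)[symmetric]] by (cases "k \<le> k'") auto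
  define \<psi> where "\<psi> x = (let r = (SOME r. fst r \<in> H \<and> x = fst r + nsm (snd r) g) in \<phi> (fst r) * w ^ snd r)" for x
  have psi: "\<psi> (h + nsm k g) = \<phi> h * w ^ k" if "h \<in> H" for h k
  proof -
    let ?x = "h + nsm k g"
    have exr: "\<exists>r. fst r \<in> H \<and> ?x = fst r + nsm (snd r) g" using that by (intro exI[of _ "(h,k)"]) auto
    define r where "r = (SOME r. fst r \<in> H \<and> ?x = fst r + nsm (snd r) g)"
    have r: "fst r \<in> H" "?x = fst r + nsm (snd r) g" using someI_ex[OF exr] unfolding r_def by auto
    have "\<psi> ?x = \<phi> (fst r) * w ^ snd r" unfolding \<psi>_def Let_def r_def by simp
    also have "\<dots> = \<phi> h * w ^ k" using wd[OF r(1) that r(2)[symmetric]] .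
    finally show ?thesis .
  qed
  have "hchar (ext_set H g) \<psi>"
    unfolding hchar_def ext_set_def
  proof (intro conjI ballI)
    fix x y assume "x \<in> {h + nsm k g |h k. h \<in> H}" "y \<in> {h + nsm k g |h k. h \<in> H}"
    then obtain h1 k1 h2 k2 where xy: "x = h1 + nsm k1 g" "y = h2 + nsm k2 g" "h1 \<in> H" "h2 \<in> H" by auto
    have "x + y = (h1 + h2) + nsm (k1 + k2) g" using xy by (simp add: nsm_add algebra_simps)
    moreover have "h1 + h2 \<in> H" using H xy by (auto simp: subgrp_def)
    ultimately have "\<psi> (x + y) = \<phi> (h1 + h2) * w ^ (k1 + k2)" using psi by simp
    also have "\<dots> = (\<phi> h1 * w ^ k1) * (\<phi> h2 * w ^ k2)"
      using chi xy unfolding hchar_def by (simp add: power_add)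
    also have "\<dots> = \<psi> x * \<psi> y" using xy psi by simp
    finally show "\<psi> (x + y) = \<psi> x * \<psi> y" .
next
    fix x assume "x \<in> {h + nsm k g |h k. h \<in> H}"
    then obtain h1 k1 where "x = h1 + nsm k1 g" "h1 \<in> H" by auto
    then show "norm (\<psi> x) = 1" using psi chi normw by (simp add: hchar_def norm_mult norm_power)
  qed
  moreover have "\<forall>x\<in>H. \<psi> x = \<phi> x" using psi[of _ 0] by simp
  moreover have "\<psi> g = w" using psi[of 0 1] H chi hchar_nsm[OF H chi, of 0 0]
    by (simp add: subgrp_def)
  ultimately show ?thesis using n by blast
qed

lemma root_exists:
  assumes "n > 0" "norm (c::complex) = 1"
  shows "\<exists>w. w ^ n = c"
proof -
  have "c \<noteq> 0" using assms by auto
  have "exp (Ln c / of_nat n) ^ n = exp (of_nat n * (Ln c / of_nat n))"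
    by (rule exp_of_nat_mult[symmetric])
  also have "\<dots> = c" using assms \<open>c \<noteq> 0\<close> by simp
  finally show ?thesis by blast
qed

lemma extend_char:
  fixes H :: "'a::{ab_group_add,finite} set"
  assumes "subgrp H" "hchar H \<phi>"
  shows "\<exists>\<psi>. hchar UNIV \<psi> \<and> (\<forall>x\<in>H. \<psi> x = \<phi> x)"
  using assms
proof (induction "card (UNIV - H)" arbitrary: H \<phi> rule: less_induct)
  case less
  show ?case
  proof (cases "H = UNIV")
    case True
    then show ?thesis using less.prems by blast
  next
    case False
    then obtain g where g: "g \<notin> H" by blast
    define n where "n = (LEAST n. n > 0 \<and> nsm n g \<in> H)"
    have "n > 0 \<and> nsm n g \<in> H"
    proof -
      obtain d where d: "d > 0" "nsm d g = 0" using finite_order by blast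
      have ex: "\<exists>n. n > 0 \<and> nsm n g \<in> H" using d less.prems by (auto simp: subgrp_def)
      show ?thesis using LeastI_ex[OF ex] unfolding n_def by auto
    qed
    then obtain w where w: "w ^ n = \<phi> (nsm n g)"
      using root_exists[of n "\<phi> (nsm n g)"] less.prems by (auto simp: hchar_def)
    from step_ext[OF less.prems g, of w] w obtain \<psi> where
      psi: "hchar (ext_set H g) \<psi>" "\<forall>x\<in>H. \<psi> x = \<phi> x" unfolding n_def by blast
    have sub: "H \<subseteq> ext_set H g" unfolding ext_set_def by (force intro: exI[of _ 0])
    have "g \<in> ext_set H g" unfolding ext_set_def using less.prems
      by (auto simp: subgrp_def intro!: exI[of _ 0] exI[of _ 1])
    then have "card (UNIV - ext_set H g) < card (UNIV - H)"
      using sub g by (intro psubset_card_mono) auto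
    from less.hyps[OF this subgrp_ext_set[OF less.prems(1)] psi(1)] obtain \<psi>' where
      psi': "hchar UNIV \<psi>'" "\<forall>x\<in>ext_set H g. \<psi>' x = \<psi> x" by blast
    have "\<forall>x\<in>H. \<psi>' x = \<phi> x" using psi psi' sub by auto
    then show ?thesis using psi' by blast
  qed
qed

lemma separating_char:
  fixes a :: "'a::{ab_group_add,finite}"
  assumes "a \<noteq> 0"
  shows "\<exists>\<phi>. group_char \<phi> \<and> \<phi> a \<noteq> 1"
proof -
  have H0: "subgrp {0::'a}" by (simp add: subgrp_def)
  have c0: "hchar {0::'a} (\<lambda>_. 1)" by (simp add: hchar_def)
  define n where "n = (LEAST n. n > 0 \<and> nsm n a \<in> {0})"
  have "n > 0 \<and> nsm n a \<in> {0}"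
  proof -
    obtain d where d: "d > 0" "nsm d a = 0" using finite_order by blast
    have ex: "\<exists>n. n > 0 \<and> nsm n a \<in> {0}" using d by auto
    show ?thesis using LeastI_ex[OF ex] unfolding n_def by auto
  qed
  then have n: "n > 0" by auto
  have "n \<noteq> 1" using \<open>n > 0 \<and> nsm n a \<in> {0}\<close> assms by auto
  then have n2: "n > 1" using n by simp
  define w where "w = exp (complex_of_real (2 * pi / real n) * \<i>)"
  have "of_nat n * (complex_of_real (2 * pi / real n) * \<i>) = 2 * complex_of_real pi * \<i>"
    using n by (simp add: field_simps)
  then have "w ^ n = 1" unfolding w_def by (metis exp_of_nat_mult exp_two_pi_i)
  then have wn: "w ^ n = (\<lambda>_. 1) (nsm n a)" by simp
  have "w \<noteq> 1"
  proof
    assume "w = 1"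
    then obtain k :: int where k: "2 * pi / real n = 2 * pi * of_int k"
      unfolding w_def exp_eq_1 by auto
    then have "2 * pi * (of_int k * real n) = 2 * pi * 1" using n by (simp add: field_simps)
    then have "of_int k * real n = 1" by simp
    then have "k * int n = 1" by (metis of_int_eq_1_iff of_int_mult of_int_of_nat_eq)
    then show False using n2 by (simp add: zmult_eq_1_iff)
  qed
  from step_ext[OF H0 c0, of a w] assms wn obtain \<psi> where
    psi: "hchar (ext_set {0} a) \<psi>" "\<psi> a = w" unfolding n_def by auto
  from extend_char[OF subgrp_ext_set[OF H0] psi(1)] obtain \<psi>' where
    psi': "hchar UNIV \<psi>'" "\<forall>x\<in>ext_set {0} a. \<psi>' x = \<psi> x" by blast
  moreover have "a \<in> ext_set {0} a" unfolding ext_set_def by (force intro: exI[of _ 1])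
  ultimately have ne: "\<psi>' a \<noteq> 1" using psi \<open>w \<noteq> 1\<close> by auto
  have "group_char \<psi>'" using psi'(1) unfolding group_char_def hchar_def by blast
  then show ?thesis using ne by blast
qed

lemma topspace_cfg: "topspace cfg_topology = UNIV"
  by (simp add: cfg_topology_def)

lemma open_cyl:
  assumes "openin cfg_topology S" "x \<in> S"
  shows "\<exists>W. finite W \<and> (\<forall>y. (\<forall>m\<in>W. y m = x m) \<longrightarrow> y \<in> S)"
proof -
  from assms obtain U where U: "finite {i \<in> UNIV. U i \<noteq> topspace (discrete_topology UNIV)}"
     "x \<in> Pi\<^sub>E UNIV U" "Pi\<^sub>E UNIV U \<subseteq> S"
    unfolding cfg_topology_def openin_product_topology_alt by blast
  show ?thesis
  proof (intro exI[of _ "{i. U i \<noteq> UNIV}"] conjI allI impI)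
    show "finite {i. U i \<noteq> UNIV}" using U(1) by simp
    fix y assume y: "\<forall>m\<in>{i. U i \<noteq> UNIV}. y m = x m"
    have "y \<in> Pi\<^sub>E UNIV U"
      using U(2) y by (auto simp: PiE_def Pi_def) (metis UNIV_I)
    then show "y \<in> S" using U(3) by blast
  qed
qed

lemma cyl_open:
  assumes "finite W"
  shows "openin cfg_topology {y. \<forall>m\<in>W. y m = x m}"
  unfolding cfg_topology_def openin_product_topology_alt
proof (intro ballI)
  fix z assume z: "z \<in> {y. \<forall>m\<in>W. y m = x m}"
  let ?U = "\<lambda>i. if i \<in> W then {x i} else UNIV"
  show "\<exists>U. finite {i \<in> UNIV. U i \<noteq> topspace (discrete_topology UNIV)} \<and>
             (\<forall>i\<in>UNIV. openin (discrete_topology UNIV) (U i)) \<and> z \<in> Pi\<^sub>E UNIV U \<and> Pi\<^sub>E UNIV U \<subseteq> {y. \<forall>m\<in>W. y m = x m}"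
  proof (intro exI[of _ ?U] conjI ballI)
    show "finite {i \<in> UNIV. ?U i \<noteq> topspace (discrete_topology UNIV)}"
      using assms by (auto intro: finite_subset[of _ W])
    show "z \<in> Pi\<^sub>E UNIV ?U" using z by auto
    show "Pi\<^sub>E UNIV ?U \<subseteq> {y. \<forall>m\<in>W. y m = x m}" by (auto simp: PiE_def Pi_def)
  qed auto
qed

lemma compact_cfg: "compact_space (cfg_topology :: ('m \<Rightarrow> 'a::finite) topology)"
  unfolding cfg_topology_def compact_space_product_topology
  by (simp add: compact_space_discrete_topology)

lemma finite_cover:
  fixes W :: "('m \<Rightarrow> 'a::finite) \<Rightarrow> 'm set"
  assumes "\<And>x. finite (W x)"
  shows "\<exists>X0. finite X0 \<and> (\<forall>y. \<exists>x\<in>X0. \<forall>m\<in>W x. y m = x m)"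
proof -
  let ?C = "\<lambda>x. {y. \<forall>m\<in>W x. y m = x m}"
  have "\<exists>\<F>. finite \<F> \<and> \<F> \<subseteq> range ?C \<and> topspace cfg_topology \<subseteq> \<Union>\<F>"
    using compact_cfg[unfolded compact_space_alt, rule_format, of "range ?C"] cyl_open[OF assms]
    by (auto simp: topspace_cfg)
  then obtain \<F> where F: "finite \<F>" "\<F> \<subseteq> range ?C" "UNIV \<subseteq> \<Union>\<F>" by (auto simp: topspace_cfg)
  obtain X0 where "X0 \<subseteq> UNIV" "\<F> = ?C ` X0" "finite X0"
    using finite_subset_image[OF F(1) F(2)] by blast
  then show ?thesis using F(3) by (intro exI[of _ X0]) auto
qed

lemma uniform_dep:
  fixes f :: "('m \<Rightarrow> 'a::finite) \<Rightarrow> real"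
  assumes f: "continuous_map cfg_topology euclideanreal f" and e: "e > 0"
  shows "\<exists>W. finite W \<and> (\<forall>x y. (\<forall>m\<in>W. x m = y m) \<longrightarrow> \<bar>f x - f y\<bar> < e)"
proof -
  have "\<exists>W. finite W \<and> (\<forall>y. (\<forall>m\<in>W. y m = x m) \<longrightarrow> y \<in> {z. \<bar>f z - f x\<bar> < e/2})" for x
  proof (rule open_cyl)
    have "openin cfg_topology {z \<in> topspace cfg_topology. f z \<in> ball (f x) (e/2)}"
      using openin_continuous_map_preimage[OF f, of "ball (f x) (e/2)"] by simp
    then show "openin cfg_topology {z. \<bar>f z - f x\<bar> < e/2}"
      by (simp add: topspace_cfg dist_real_def abs_minus_commute)
  qed (use e in auto)
  then have "\<exists>W. \<forall>x. finite (W x) \<and> (\<forall>y. (\<forall>m\<in>W x. y m = x m) \<longrightarrow> y \<in> {z. \<bar>f z - f x\<bar> < e/2})"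
    by (intro choice) blast
  then obtain W where W0: "\<forall>x. finite (W x) \<and> (\<forall>y. (\<forall>m\<in>W x. y m = x m) \<longrightarrow> y \<in> {z. \<bar>f z - f x\<bar> < e/2})"
    by blast
  have W1: "\<And>x. finite (W x)" using W0 by simp
  have W2: "\<bar>f y - f x\<bar> < e/2" if "\<forall>m\<in>W x. y m = x m" for x y
  proof -
    have "y \<in> {z. \<bar>f z - f x\<bar> < e/2}" using mp[OF spec[OF conjunct2[OF spec[OF W0, of x]], of y] that] .
    then show ?thesis by simp
  qed
  note W = W1 W2
  obtain X0 :: "('m \<Rightarrow> 'a) set" where X0: "finite X0" "\<forall>y. \<exists>x\<in>X0. \<forall>m\<in>W x. y m = x m"
    using finite_cover[of W, OF W1] by (elim exE conjE)
  show ?thesis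
  proof (intro exI[of _ "\<Union>x\<in>X0. W x"] conjI allI impI)
    show "finite (\<Union>x\<in>X0. W x)" using X0(1) W1 by (intro finite_UN_I) auto
    fix y z :: "'m \<Rightarrow> 'a" assume yz: "\<forall>m\<in>(\<Union>x\<in>X0. W x). y m = z m"
    obtain x where x: "x \<in> X0" "\<forall>m\<in>W x. y m = x m" using X0 by blast
    have "\<forall>m\<in>W x. z m = x m" using x yz by auto
    then have "\<bar>f z - f x\<bar> < e/2" by (rule W2)
    moreover have "\<bar>f y - f x\<bar> < e/2" using x(2) by (rule W2)
    ultimately show "\<bar>f y - f z\<bar> < e" by linarith
  qed
qed

lemma continuous_coord:
  assumes "continuous_map cfg_topology cfg_topology G"
  shows "continuous_map cfg_topology (discrete_topology UNIV) (\<lambda>x. G x m)"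
proof -
  have "continuous_map cfg_topology (discrete_topology UNIV) ((\<lambda>x. x m) \<circ> G)"
    using continuous_map_compose[OF assms, of "discrete_topology UNIV" "\<lambda>x. x m"]
      continuous_map_product_projection[of m UNIV "\<lambda>_. discrete_topology UNIV"]
    unfolding cfg_topology_def by simp
  then show ?thesis by (simp add: o_def)
qed

lemma discrete_dep:
  fixes G :: "('m \<Rightarrow> 'a::finite) \<Rightarrow> ('m \<Rightarrow> 'a)"
  assumes G: "continuous_map cfg_topology cfg_topology G"
  shows "\<exists>W. finite W \<and> (\<forall>x y. (\<forall>i\<in>W. x i = y i) \<longrightarrow> G x m = G y m)"
proof -
  have "\<exists>W. finite W \<and> (\<forall>y. (\<forall>i\<in>W. y i = x i) \<longrightarrow> y \<in> {z. G z m = G x m})" for x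
  proof (rule open_cyl)
    have "openin cfg_topology {z \<in> topspace cfg_topology. G z m \<in> {G x m}}"
      using openin_continuous_map_preimage[OF continuous_coord[OF G, of m], of "{G x m}"] by simp
    then show "openin cfg_topology {z. G z m = G x m}"
      by (simp add: topspace_cfg)
  qed (rule CollectI, rule refl)
  then have "\<exists>W. \<forall>x. finite (W x) \<and> (\<forall>y. (\<forall>i\<in>W x. y i = x i) \<longrightarrow> y \<in> {z. G z m = G x m})"
    by (intro choice) blast
  then obtain W where W0: "\<forall>x. finite (W x) \<and> (\<forall>y. (\<forall>i\<in>W x. y i = x i) \<longrightarrow> y \<in> {z. G z m = G x m})"
    by blast
  have W1: "\<And>x. finite (W x)" using W0 by simp
  have W2: "G y m = G x m" if "\<forall>i\<in>W x. y i = x i" for x y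
  proof -
    have "y \<in> {z. G z m = G x m}" using mp[OF spec[OF conjunct2[OF spec[OF W0, of x]], of y] that] .
    then show ?thesis by simp
  qed
  note W = W1 W2
  obtain X0 :: "('m \<Rightarrow> 'a) set" where X0: "finite X0" "\<forall>y. \<exists>x\<in>X0. \<forall>i\<in>W x. y i = x i"
    using finite_cover[of W, OF W1] by (elim exE conjE)
  show ?thesis
  proof (intro exI[of _ "\<Union>x\<in>X0. W x"] conjI allI impI)
    show "finite (\<Union>x\<in>X0. W x)" using X0(1) W1 by (intro finite_UN_I) auto
    fix y z :: "'m \<Rightarrow> 'a" assume yz: "\<forall>i\<in>(\<Union>x\<in>X0. W x). y i = z i"
    obtain x where x: "x \<in> X0" "\<forall>i\<in>W x. y i = x i" using X0 by blast
    have "\<forall>i\<in>W x. z i = x i" using x yz by auto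
    then have "G z m = G x m" by (rule W2)
    moreover have "G y m = G x m" using x(2) by (rule W2)
    ultimately show "G y m = G z m" by simp
  qed
qed

lemma space_cfg: "space cfg_space = UNIV"
  by (auto simp: cfg_space_def space_PiM PiE_def extensional_def)

definition trunc :: "'m set \<Rightarrow> ('m \<Rightarrow> 'a::zero) \<Rightarrow> ('m \<Rightarrow> 'a)" where
  "trunc W x = (\<lambda>m. if m \<in> W then x m else 0)"

lemma finite_trunc_range:
  assumes W: "finite W"
  shows "finite (range (trunc W :: ('m \<Rightarrow> 'a::{zero,finite}) \<Rightarrow> _))"
proof -
  have "range (trunc W :: ('m \<Rightarrow> 'a) \<Rightarrow> _) \<subseteq> (\<lambda>g m. if m \<in> W then g m else 0) ` (PiE W (\<lambda>_. UNIV))"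
  proof
    fix t :: "'m \<Rightarrow> 'a" assume "t \<in> range (trunc W)"
    then obtain x where "t = trunc W x" by auto
    then show "t \<in> (\<lambda>g m. if m \<in> W then g m else 0) ` (PiE W (\<lambda>_. UNIV))"
      by (intro image_eqI[of _ _ "restrict x W"]) (auto simp: trunc_def)
  qed
  moreover have "finite (PiE W (\<lambda>_. UNIV::'a set))" using W by (simp add: finite_PiE)
  ultimately show ?thesis by (meson finite_imageI finite_subset)
qed

lemma cyl_sets:
  assumes "finite W"
  shows "{x. \<forall>m\<in>W. x m = t m} \<in> sets cfg_space"
  using assms
proof (induction W rule: finite_induct)
  case empty
  then show ?case using sets.top[of cfg_space] by (simp add: space_cfg)
next
  case (insert m W)
  have eq: "{x. \<forall>i\<in>insert m W. x i = t i} = ((\<lambda>x. x m) -` {t m} \<inter> space cfg_space) \<inter> {x. \<forall>i\<in>W. x i = t i}"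
    by (auto simp: space_cfg)
  have "(\<lambda>x. x m) \<in> measurable cfg_space (count_space UNIV)"
    unfolding cfg_space_def by (rule measurable_component_singleton) simp
  then have "(\<lambda>x. x m) -` {t m} \<inter> space cfg_space \<in> sets cfg_space"
    by (rule measurable_sets) simp
  then show ?case unfolding eq using insert.IH by (rule sets.Int)
qed

lemma dep_measurable:
  fixes h :: "('m \<Rightarrow> 'a::{zero,finite}) \<Rightarrow> 'b"
  assumes W: "finite W" and dep: "\<And>x y. \<forall>m\<in>W. x m = y m \<Longrightarrow> h x = h y"
    and sp: "\<And>x. h x \<in> space N"
  shows "h \<in> measurable cfg_space N"
proof (rule measurableI)
  show "\<And>x. x \<in> space cfg_space \<Longrightarrow> h x \<in> space N" by (rule sp)
  fix A assume A: "A \<in> sets N"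
  let ?T = "{t \<in> range (trunc W). h t \<in> A}"
  have eq: "h -` A \<inter> space cfg_space = (\<Union>t\<in>?T. {x. \<forall>m\<in>W. x m = t m})"
  proof (intro set_eqI iffI)
    fix x assume "x \<in> h -` A \<inter> space cfg_space"
    then have hx: "h x \<in> A" by simp
    have ag: "\<forall>m\<in>W. x m = trunc W x m" by (simp add: trunc_def)
    then have "h (trunc W x) \<in> A" using dep[OF ag] hx by simp
    then show "x \<in> (\<Union>t\<in>?T. {x. \<forall>m\<in>W. x m = t m})" using ag by blast
  next
    fix x assume "x \<in> (\<Union>t\<in>?T. {x. \<forall>m\<in>W. x m = t m})"
    then obtain t where t: "t \<in> ?T" "\<forall>m\<in>W. x m = t m" by blast
    then have "h x = h t" using dep by blast
    then show "x \<in> h -` A \<inter> space cfg_space" using t by (simp add: space_cfg)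
  qed
  have fin: "finite ?T" using finite_trunc_range[OF W] by (rule finite_subset[rotated]) auto
  show "h -` A \<inter> space cfg_space \<in> sets cfg_space"
    unfolding eq using fin by (intro sets.finite_UN cyl_sets W) auto
qed

lemma LCA_pow_cont:
  assumes "is_LCA F"
  shows "continuous_map cfg_topology cfg_topology (F ^^ j)"
proof (induction j)
  case 0
  then show ?case by (simp add: continuous_map_id)
next
  case (Suc j)
  have Fc: "continuous_map cfg_topology cfg_topology F" using assms by (simp add: is_LCA_def)
  show ?case unfolding funpow.simps(2) by (rule continuous_map_compose[OF Suc Fc])
qed

lemma LCA_pow_add:
  assumes "is_LCA F"
  shows "(F ^^ j) (\<lambda>m. x m + y m) = (\<lambda>m. (F ^^ j) x m + (F ^^ j) y m)"
proof (induction j)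
  case 0
  then show ?case by simp
next
  case (Suc j)
  then show ?case using assms by (simp add: is_LCA_def)
qed

lemma LCA_pow_meas:
  fixes F :: "('m::monoid_mult \<Rightarrow> 'a::{ab_group_add,finite}) \<Rightarrow> ('m \<Rightarrow> 'a)"
  assumes "is_LCA F"
  shows "(F ^^ j) \<in> measurable cfg_space cfg_space"
proof -
  have coord: "(\<lambda>x. (F ^^ j) x m) \<in> measurable cfg_space (count_space UNIV)" for m
  proof -
    obtain W where W: "finite W" "\<forall>x y. (\<forall>i\<in>W. x i = y i) \<longrightarrow> (F ^^ j) x m = (F ^^ j) y m"
      using discrete_dep[OF LCA_pow_cont[OF assms], of j m] by (elim exE conjE)
    show ?thesis by (rule dep_measurable[OF W(1)]) (use W(2) in auto)
  qed
  have "(\<lambda>x m. (F ^^ j) x m) \<in> measurable cfg_space (Pi\<^sub>M UNIV (\<lambda>_. count_space UNIV))"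
    by (rule measurable_PiM_single') (use coord in \<open>auto simp: PiE_def extensional_def\<close>)
  then show ?thesis unfolding cfg_space_def[symmetric] by simp
qed

lemma group_char_0: "group_char \<phi> \<Longrightarrow> \<phi> 0 = 1"
proof -
  assume g: "group_char \<phi>"
  then have h: "\<forall>x y. \<phi> (x + y) = \<phi> x * \<phi> y" "\<forall>x. norm (\<phi> x) = 1"
    unfolding group_char_def by blast+
  have eq: "\<phi> 0 * \<phi> 0 = \<phi> 0 * 1" using h(1)[rule_format, of 0 0] by simp
  have ne: "\<phi> 0 \<noteq> 0" using h(2)[rule_format, of 0] by auto
  show "\<phi> 0 = 1" using eq unfolding mult_left_cancel[OF ne] .
qed

lemma char_family_finite: "char_family c \<Longrightarrow> finite (char_supp c)"
  by (simp add: char_family_def)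

lemma prod_char_superset:
  assumes "char_family c" "finite S" "char_supp c \<subseteq> S"
  shows "prod_char c x = (\<Prod>m\<in>S. c m (x m))"
  unfolding prod_char_def
proof (rule prod.mono_neutral_left[OF assms(2,3)])
  show "\<forall>i\<in>S - char_supp c. c i (x i) = 1" by (auto simp: char_supp_def)
qed

lemma prod_char_hom:
  assumes "char_family c"
  shows "prod_char c (\<lambda>m. x m + y m) = prod_char c x * prod_char c y"
  unfolding prod_char_def using assms
  by (simp add: char_family_def group_char_def prod.distrib)

lemma prod_char_norm:
  assumes "char_family c"
  shows "norm (prod_char c x) = 1"
  unfolding prod_char_def using assms
  by (simp add: char_family_def group_char_def prod_norm[symmetric])

lemma prod_char_dep:
  assumes "\<forall>m\<in>char_supp c. x m = y m"
  shows "prod_char c x = prod_char c y"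
  unfolding prod_char_def using assms by (intro prod.cong) auto

lemma hom_is_char:
  fixes \<psi> :: "('m \<Rightarrow> 'a::ab_group_add) \<Rightarrow> complex"
  assumes hom: "\<And>x y. \<psi> (\<lambda>m. x m + y m) = \<psi> x * \<psi> y" and nrm: "\<And>x. norm (\<psi> x) = 1"
    and W: "finite W" and dep: "\<And>x y. \<forall>m\<in>W. x m = y m \<Longrightarrow> \<psi> x = \<psi> y"
  shows "\<psi> \<in> characters"
proof -
  define e where "e m a = (\<lambda>i::'m. if i = m then a else (0::'a))" for m a
  define c where "c m = (if m \<in> W then (\<lambda>a. \<psi> (e m a)) else (\<lambda>_. 1))" for m
  have psi0: "\<psi> (\<lambda>_. 0) = 1"
  proof -
    have "\<psi> (\<lambda>_. 0) * \<psi> (\<lambda>_. 0) = \<psi> (\<lambda>_. 0) * 1" using hom[of "\<lambda>_. 0" "\<lambda>_. 0"] by simp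
    moreover have "\<psi> (\<lambda>_. 0) \<noteq> 0" using nrm[of "\<lambda>_. 0"] by auto
    ultimately show ?thesis using mult_left_cancel by blast
  qed
  have gc: "group_char (c m)" for m
  proof (cases "m \<in> W")
    case True
    have "e m (a + b) = (\<lambda>i. e m a i + e m b i)" for a b by (auto simp: e_def)
    then show ?thesis using True hom nrm by (simp add: group_char_def c_def)
  next
    case False
    then show ?thesis by (simp add: group_char_def c_def)
  qed
  have supp: "char_supp c \<subseteq> W" by (auto simp: char_supp_def c_def)
  have cf: "char_family c" using gc supp W by (auto simp: char_family_def intro: finite_subset)
  have key: "\<psi> (trunc V x) = (\<Prod>m\<in>V. \<psi> (e m (x m)))" if "finite V" for V x
    using that
  proof (induction V rule: finite_induct)
    case empty
    then show ?case using psi0 by (simp add: trunc_def)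
  next
    case (insert m V)
    have "trunc (insert m V) x = (\<lambda>i. e m (x m) i + trunc V x i)"
      using insert.hyps(2) by (auto simp: trunc_def e_def)
    then show ?case using insert hom by simp
  qed
  have "\<psi> x = prod_char c x" for x
  proof -
    have "\<psi> x = \<psi> (trunc W x)" by (rule dep) (simp add: trunc_def)
    also have "\<dots> = (\<Prod>m\<in>W. \<psi> (e m (x m)))" using key[OF W] .
    also have "\<dots> = (\<Prod>m\<in>W. c m (x m))" by (intro prod.cong) (auto simp: c_def)
    also have "\<dots> = prod_char c x" using prod_char_superset[OF cf W supp] by simp
    finally show ?thesis .
  qed
  then have "\<psi> = prod_char c" by auto
  then show ?thesis using cf unfolding characters_def by blast
qed

lemma char_comp_LCA:
  fixes F :: "('m::monoid_mult \<Rightarrow> 'a::{ab_group_add,finite}) \<Rightarrow> ('m \<Rightarrow> 'a)"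
  assumes F: "is_LCA F" and ch: "ch \<in> characters"
  shows "(ch \<circ> (F ^^ j)) \<in> characters"
proof -
  obtain c where c: "char_family c" "ch = prod_char c" using ch unfolding characters_def by blast
  have "\<forall>m. \<exists>W. finite W \<and> (\<forall>x y. (\<forall>i\<in>W. x i = y i) \<longrightarrow> (F ^^ j) x m = (F ^^ j) y m)"
    using discrete_dep[OF LCA_pow_cont[OF F]] by blast
  then obtain Wf where Wf: "\<forall>m. finite (Wf m) \<and> (\<forall>x y. (\<forall>i\<in>Wf m. x i = y i) \<longrightarrow> (F ^^ j) x m = (F ^^ j) y m)"
    by (rule choice[THEN exE]) blast
  let ?W = "\<Union>m\<in>char_supp c. Wf m"
  have finW: "finite ?W" using Wf char_family_finite[OF c(1)] by auto
  show ?thesis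
  proof (rule hom_is_char[OF _ _ finW])
    show "(ch \<circ> (F ^^ j)) (\<lambda>m. x m + y m) = (ch \<circ> (F ^^ j)) x * (ch \<circ> (F ^^ j)) y" for x y
      using c prod_char_hom[OF c(1)] LCA_pow_add[OF F] by simp
    show "norm ((ch \<circ> (F ^^ j)) x) = 1" for x using c prod_char_norm by simp
    show "(ch \<circ> (F ^^ j)) x = (ch \<circ> (F ^^ j)) y" if "\<forall>m\<in>?W. x m = y m" for x y
    proof -
      have "\<forall>m\<in>char_supp c. (F ^^ j) x m = (F ^^ j) y m" using that Wf by blast
      then show ?thesis using c by (simp add: prod_char_dep)
    qed
  qed
qed

lemma char_measurable:
  fixes ch :: "('m \<Rightarrow> 'a::{ab_group_add,finite}) \<Rightarrow> complex"
  assumes "ch \<in> characters"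
  shows "ch \<in> borel_measurable cfg_space"
proof -
  obtain c where c: "char_family c" "ch = prod_char c" using assms unfolding characters_def by blast
  show ?thesis unfolding c(2)
    by (rule dep_measurable[OF char_family_finite[OF c(1)]]) (auto intro: prod_char_dep)
qed

lemma haar_pps: "product_prob_space (\<lambda>_::'m. uniform_count_measure (UNIV::'a::finite set))"
  by (simp add: product_prob_space_def product_sigma_finite_def prob_space_uniform_count_measure
      prob_space_imp_sigma_finite product_prob_space_axioms_def)

lemma prob_haar: "prob_space (haar :: ('m \<Rightarrow> 'a::finite) measure)"
proof -
  interpret product_prob_space "\<lambda>_::'m. uniform_count_measure (UNIV::'a set)" UNIV by (rule haar_pps)
  show ?thesis unfolding haar_def by (rule P.prob_space_axioms)
qed

lemma sets_haar: "sets (haar :: ('m \<Rightarrow> 'a::finite) measure) = sets cfg_space"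
  unfolding haar_def cfg_space_def
  by (rule sets_PiM_cong) (auto simp: sets_uniform_count_measure)

lemma unif_integrable: "integrable (uniform_count_measure (UNIV::'a::finite set)) (f :: 'a \<Rightarrow> complex)"
proof -
  interpret prob_space "uniform_count_measure (UNIV::'a set)"
    by (simp add: prob_space_uniform_count_measure)
  have m: "f \<in> borel_measurable (uniform_count_measure UNIV)"
    by (simp add: measurable_cong_sets[OF sets_uniform_count_measure_count_space refl])
  show ?thesis
    by (rule integrable_const_bound[where B="Max (range (\<lambda>a. norm (f a)))"]) (auto intro: m)
qed

lemma haar_prod_char:
  fixes c :: "'m \<Rightarrow> 'a::{ab_group_add,finite} \<Rightarrow> complex"
  assumes cf: "char_family c"
  shows "integral\<^sup>L haar (prod_char c) = (\<Prod>m\<in>char_supp c. integral\<^sup>L (uniform_count_measure UNIV) (c m))"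
proof -
  interpret product_prob_space "\<lambda>_::'m. uniform_count_measure (UNIV::'a set)" UNIV by (rule haar_pps)
  let ?J = "char_supp c"
  let ?U = "\<lambda>_::'m. uniform_count_measure (UNIV::'a set)"
  have J: "finite ?J" using char_family_finite[OF cf] .
  let ?g = "\<lambda>y. \<Prod>m\<in>?J. c m (y m)"
  have gm: "?g \<in> borel_measurable (Pi\<^sub>M ?J ?U)"
  proof (intro borel_measurable_prod)
    fix m assume "m \<in> ?J"
    have "(\<lambda>y. y m) \<in> measurable (Pi\<^sub>M ?J ?U) (?U m)"
      using \<open>m \<in> ?J\<close> by (rule measurable_component_singleton)
    moreover have "c m \<in> borel_measurable (?U m)"
      by (simp add: measurable_cong_sets[OF sets_uniform_count_measure_count_space refl])
    ultimately show "(\<lambda>y. c m (y m)) \<in> borel_measurable (Pi\<^sub>M ?J ?U)"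
      using measurable_compose by blast
  qed
  have pe: "prod_char c = (\<lambda>x. ?g (restrict x ?J))"
    unfolding prod_char_def by (intro ext prod.cong) auto
  have "integral\<^sup>L haar (prod_char c) = integral\<^sup>L (Pi\<^sub>M UNIV ?U) (\<lambda>x. ?g (restrict x ?J))"
    unfolding haar_def pe ..
  also have "\<dots> = integral\<^sup>L (distr (Pi\<^sub>M UNIV ?U) (Pi\<^sub>M ?J ?U) (\<lambda>x. restrict x ?J)) ?g"
    by (rule integral_distr[symmetric, OF measurable_restrict_subset gm]) simp
  also have "distr (Pi\<^sub>M UNIV ?U) (Pi\<^sub>M ?J ?U) (\<lambda>x. restrict x ?J) = Pi\<^sub>M ?J ?U"
    using J by (intro distr_PiM_restrict_finite) auto
  also have "integral\<^sup>L (Pi\<^sub>M ?J ?U) ?g = (\<Prod>m\<in>?J. integral\<^sup>L (?U m) (c m))"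
    by (rule product_integral_prod[OF J unif_integrable])
  finally show ?thesis .
qed

lemma char_sum_zero:
  fixes \<phi> :: "'a::{ab_group_add,finite} \<Rightarrow> complex"
  assumes g: "group_char \<phi>" and nt: "\<phi> \<noteq> (\<lambda>_. 1)"
  shows "(\<Sum>a\<in>UNIV. \<phi> a) = 0"
proof -
  obtain b where b: "\<phi> b \<noteq> 1" using nt by auto
  have bij: "bij_betw (\<lambda>a. a + b) UNIV UNIV"
    by (rule bij_betwI[of _ _ _ "\<lambda>a. a - b"]) auto
  have "(\<Sum>a\<in>UNIV. \<phi> a) = (\<Sum>a\<in>UNIV. \<phi> (a + b))"
    using sum.reindex_bij_betw[OF bij, of \<phi>] by simp
  also have "\<dots> = (\<Sum>a\<in>UNIV. \<phi> a * \<phi> b)" using g by (simp add: group_char_def)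
  also have "\<dots> = \<phi> b * (\<Sum>a\<in>UNIV. \<phi> a)" by (simp add: sum_distrib_left mult.commute)
  finally have "(1 - \<phi> b) * (\<Sum>a\<in>UNIV. \<phi> a) = 0" by (simp add: algebra_simps)
  then show ?thesis using b by simp
qed

lemma haar_char:
  fixes ch :: "('m \<Rightarrow> 'a::{ab_group_add,finite}) \<Rightarrow> complex"
  assumes ch: "ch \<in> characters"
  shows "integral\<^sup>L haar ch = (if ch = (\<lambda>_. 1) then 1 else 0)"
proof (cases "ch = (\<lambda>_. 1)")
  case True
  interpret prob_space "haar :: ('m \<Rightarrow> 'a) measure" by (rule prob_haar)
  show ?thesis using True by (simp add: prob_space)
next
  case False
  obtain c where c: "char_family c" "ch = prod_char c" using ch unfolding characters_def by blast
  have "char_supp c \<noteq> {}"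
  proof
    assume "char_supp c = {}"
    then have "ch = (\<lambda>_. 1)" using c by (auto simp: prod_char_def)
    then show False using False by simp
  qed
  then obtain m where m: "m \<in> char_supp c" by blast
  have "c m \<noteq> (\<lambda>_. 1)" using m by (simp add: char_supp_def)
  moreover have "group_char (c m)" using c by (simp add: char_family_def)
  ultimately have "(\<Sum>a\<in>UNIV. c m a) = 0" by (rule char_sum_zero[rotated])
  moreover have "integral\<^sup>L (uniform_count_measure UNIV) (c m) = (\<Sum>a\<in>UNIV. (1 / real (card (UNIV::'a set))) *\<^sub>R c m a)"
    by (simp add: uniform_count_measure_def lebesgue_integral_point_measure_finite)
  moreover have "(\<Sum>a\<in>UNIV. (1 / real (card (UNIV::'a set))) *\<^sub>R c m a) = (1 / real (card (UNIV::'a set))) *\<^sub>R (\<Sum>a\<in>UNIV. c m a)"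
    by (simp add: scaleR_sum_right)
  ultimately have "integral\<^sup>L (uniform_count_measure UNIV) (c m) = 0" by simp
  then have "(\<Prod>m\<in>char_supp c. integral\<^sup>L (uniform_count_measure UNIV) (c m)) = 0"
    using m char_family_finite[OF c(1)] by (intro prod_zero) auto
  then show ?thesis using haar_prod_char[OF c(1)] c False by simp
qed

lemma push_meas:
  fixes F :: "('m::monoid_mult \<Rightarrow> 'a::{ab_group_add,finite}) \<Rightarrow> ('m \<Rightarrow> 'a)"
  assumes F: "is_LCA F" and S: "sets \<mu> = sets cfg_space"
  shows "(F ^^ j) \<in> measurable \<mu> cfg_space"
proof -
  show ?thesis by (subst measurable_cong_sets[OF S refl]) (rule LCA_pow_meas[OF F])
qed

lemma push_prob:
  fixes F :: "('m::monoid_mult \<Rightarrow> 'a::{ab_group_add,finite}) \<Rightarrow> ('m \<Rightarrow> 'a)"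
  assumes F: "is_LCA F" and P: "prob_space \<mu>" and S: "sets \<mu> = sets cfg_space"
  shows "prob_space (push F j \<mu>)"
  unfolding push_def using prob_space.prob_space_distr[OF P push_meas[OF F S]] .

lemma push_sets: "sets (push F j \<mu>) = sets cfg_space"
  by (simp add: push_def)

lemma push_integral:
  fixes F :: "('m::monoid_mult \<Rightarrow> 'a::{ab_group_add,finite}) \<Rightarrow> ('m \<Rightarrow> 'a)"
    and h :: "('m \<Rightarrow> 'a) \<Rightarrow> 'b::{banach,second_countable_topology}"
  assumes F: "is_LCA F" and S: "sets \<mu> = sets cfg_space" and h: "h \<in> borel_measurable cfg_space"
  shows "integral\<^sup>L (push F j \<mu>) h = integral\<^sup>L \<mu> (\<lambda>x. h ((F ^^ j) x))"
  unfolding push_def by (rule integral_distr[OF push_meas[OF F S] h])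

definition sep :: "'a::{ab_group_add,finite} \<Rightarrow> 'a \<Rightarrow> complex" where
  "sep y = (if y = 0 then (\<lambda>_. 1) else (SOME \<phi>. group_char \<phi> \<and> \<phi> y \<noteq> 1))"

lemma sep_props: "group_char (sep y) \<and> (y \<noteq> 0 \<longrightarrow> sep y y \<noteq> 1)"
proof (cases "y = 0")
  case True
  then show ?thesis by (simp add: sep_def group_char_def)
next
  case False
  from someI_ex[OF separating_char[OF False]] False show ?thesis by (simp add: sep_def)
qed

lemma sep_char: "group_char (sep y)" using sep_props by blast
lemma sep_ne: "y \<noteq> 0 \<Longrightarrow> sep y y \<noteq> 1" using sep_props by blast

primrec P :: "('m \<times> 'a::{ab_group_add,finite}) list \<Rightarrow> ('m \<Rightarrow> 'a) \<Rightarrow> complex" where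
  "P [] x = 1"
| "P (p # l) x = sep (snd p) (x (fst p)) * P l x"

lemma P_append: "P (l1 @ l2) x = P l1 x * P l2 x"
  by (induction l1) auto

lemma group_char_mult: "group_char \<phi> \<Longrightarrow> group_char \<chi>' \<Longrightarrow> group_char (\<lambda>a. \<phi> a * \<chi>' a)"
  by (simp add: group_char_def norm_mult)

lemma one_char: "((\<lambda>_. 1) :: ('m \<Rightarrow> 'a::ab_group_add) \<Rightarrow> complex) \<in> characters"
proof -
  define c :: "'m \<Rightarrow> 'a \<Rightarrow> complex" where "c = (\<lambda>_ _. 1)"
  have cf: "char_family c"
    by (simp add: c_def char_family_def char_supp_def group_char_def)
  have "prod_char c = (\<lambda>_. 1)"
    unfolding prod_char_def char_supp_def c_def by (rule ext) simp
  then show ?thesis using cf unfolding characters_def by force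
qed

lemma chars_mult:
  assumes "ch1 \<in> characters" "ch2 \<in> characters"
  shows "(\<lambda>x. ch1 x * ch2 x) \<in> characters"
proof -
  obtain c1 where c1: "char_family c1" "ch1 = prod_char c1" using assms(1) unfolding characters_def by blast
  obtain c2 where c2: "char_family c2" "ch2 = prod_char c2" using assms(2) unfolding characters_def by blast
  define c where "c m a = c1 m a * c2 m a" for m a
  let ?S = "char_supp c1 \<union> char_supp c2"
  have finS: "finite ?S" using c1 c2 by (simp add: char_family_finite)
  have supp: "char_supp c \<subseteq> ?S"
  proof
    fix m assume "m \<in> char_supp c"
    then have "c m \<noteq> (\<lambda>_. 1)" by (simp add: char_supp_def)
    then show "m \<in> ?S" by (auto simp: char_supp_def c_def)
  qed
  have cf: "char_family c"
    using c1(1) c2(1) supp finS unfolding char_family_def c_def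
    by (auto intro: group_char_mult finite_subset)
  have "prod_char c x = ch1 x * ch2 x" for x
  proof -
    have "prod_char c x = (\<Prod>m\<in>?S. c1 m (x m) * c2 m (x m))"
      using prod_char_superset[OF cf finS supp] by (simp add: c_def)
    also have "\<dots> = (\<Prod>m\<in>?S. c1 m (x m)) * (\<Prod>m\<in>?S. c2 m (x m))" by (rule prod.distrib)
    also have "\<dots> = ch1 x * ch2 x"
      using prod_char_superset[OF c1(1) finS, of x] prod_char_superset[OF c2(1) finS, of x] c1 c2 by auto
    finally show ?thesis .
  qed
  then have "(\<lambda>x. ch1 x * ch2 x) = prod_char c" by auto
  then show ?thesis using cf unfolding characters_def by blast
qed

lemma coord_char:
  assumes g: "group_char \<phi>"
  shows "(\<lambda>x. \<phi> (x m)) \<in> characters"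
proof -
  define c where "c = (\<lambda>_ _. 1 :: complex)(m := \<phi>)"
  have supp: "char_supp c \<subseteq> {m}" by (auto simp: char_supp_def c_def)
  have cf: "char_family c" using g supp unfolding char_family_def
    by (auto simp: c_def group_char_def intro: finite_subset)
  have "prod_char c x = \<phi> (x m)" for x
    using prod_char_superset[OF cf _ supp, of x] by (simp add: c_def)
  then have "(\<lambda>x. \<phi> (x m)) = prod_char c" by auto
  then show ?thesis using cf unfolding characters_def by blast
qed

lemma P_char: "P l \<in> characters"
proof (induction l)
  case Nil
  have "P [] = (\<lambda>_. 1)" by auto
  then show ?case using one_char by simp
next
  case (Cons p l)
  have "P (p # l) = (\<lambda>x. sep (snd p) (x (fst p)) * P l x)" by auto
  then show ?case using chars_mult[OF coord_char[OF sep_char] Cons] by simp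
qed

inductive inspan :: "(('m \<Rightarrow> 'a::{ab_group_add,finite}) \<Rightarrow> complex) \<Rightarrow> bool" where
  base: "inspan (P l)"
| zero: "inspan (\<lambda>_. 0)"
| add: "inspan f \<Longrightarrow> inspan g \<Longrightarrow> inspan (\<lambda>x. f x + g x)"
| smult: "inspan f \<Longrightarrow> inspan (\<lambda>x. c * f x)"

lemma inspan_cong: "inspan f \<Longrightarrow> f = g \<Longrightarrow> inspan g" by simp

lemma inspan_const: "inspan (\<lambda>_. c)"
proof -
  have "inspan (\<lambda>x. c * P [] x)" by (intro inspan.smult inspan.base)
  then show ?thesis by simp
qed

lemma inspan_multP: "inspan g \<Longrightarrow> inspan (\<lambda>x. P l x * g x)"
proof (induction rule: inspan.induct)
  case (base l')
  have "inspan (P (l @ l'))" by (rule inspan.base)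
  then show ?case by (rule inspan_cong) (auto simp: P_append)
next
  case zero
  then show ?case using inspan.zero by simp
next
  case (add f g)
  have "inspan (\<lambda>x. P l x * f x + P l x * g x)" by (rule inspan.add[OF add.IH])
  then show ?case by (rule inspan_cong) (auto simp: algebra_simps)
next
  case (smult f c)
  have "inspan (\<lambda>x. c * (P l x * f x))" by (rule inspan.smult[OF smult.IH])
  then show ?case by (rule inspan_cong) (auto simp: algebra_simps)
qed

lemma inspan_mult: "inspan f \<Longrightarrow> inspan g \<Longrightarrow> inspan (\<lambda>x. f x * g x)"
proof (induction rule: inspan.induct)
  case (base l)
  then show ?case by (rule inspan_multP)
next
  case zero
  then show ?case using inspan.zero by simp
next
  case (add f1 f2)
  have "inspan (\<lambda>x. f1 x * g x + f2 x * g x)" by (rule inspan.add[OF add.IH(1)[OF add.prems] add.IH(2)[OF add.prems]])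
  then show ?case by (rule inspan_cong) (auto simp: algebra_simps)
next
  case (smult f c)
  have "inspan (\<lambda>x. c * (f x * g x))" by (rule inspan.smult[OF smult.IH[OF smult.prems]])
  then show ?case by (rule inspan_cong) (auto simp: algebra_simps)
qed

lemma inspan_prod:
  assumes "finite S" "\<And>i. i \<in> S \<Longrightarrow> inspan (f i)"
  shows "inspan (\<lambda>x. \<Prod>i\<in>S. f i x)"
  using assms
proof (induction S rule: finite_induct)
  case empty
  then show ?case using inspan_const[of 1] by simp
next
  case (insert i S)
  have "inspan (\<lambda>x. f i x * (\<Prod>i\<in>S. f i x))"
    using insert by (intro inspan_mult) auto
  then show ?case by (rule inspan_cong) (use insert in auto)
qed

lemma inspan_sum:
  assumes "finite S" "\<And>i. i \<in> S \<Longrightarrow> inspan (f i)"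
  shows "inspan (\<lambda>x. \<Sum>i\<in>S. f i x)"
  using assms
proof (induction S rule: finite_induct)
  case empty
  then show ?case using inspan.zero by simp
next
  case (insert i S)
  have "inspan (\<lambda>x. f i x + (\<Sum>i\<in>S. f i x))"
    using insert by (intro inspan.add) auto
  then show ?case by (rule inspan_cong) (use insert in auto)
qed

lemma inspan_ind:
  fixes m :: 'm and a :: "'a::{ab_group_add,finite}"
  shows "inspan (\<lambda>x::'m \<Rightarrow> 'a. if x m = a then 1 else 0)"
proof -
  let ?S = "UNIV - {0::'a}"
  define fac where "fac y x = (sep y (x m - a) - sep y y) / (1 - sep y y)" for y and x :: "'m \<Rightarrow> 'a"
  have fac_span: "inspan (fac y)" if "y \<in> ?S" for y
  proof -
    have d: "1 - sep y y \<noteq> 0" using sep_ne[of y] that by auto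
    have hom: "sep y (x m - a) = sep y (x m) * sep y (- a)" for x :: "'m \<Rightarrow> 'a"
      using sep_char[of y] unfolding group_char_def by (metis diff_conv_add_uminus)
    have "inspan (\<lambda>x. (sep y (- a) / (1 - sep y y)) * P [(m, y)] x + (- sep y y / (1 - sep y y)) * P [] x)"
      by (intro inspan.add inspan.smult inspan.base)
    then show ?thesis
      by (rule inspan_cong) (intro ext, simp add: fac_def hom diff_divide_distrib)
  qed
  have "inspan (\<lambda>x. \<Prod>y\<in>?S. fac y x)" by (intro inspan_prod fac_span) auto
  moreover have "(\<lambda>x. \<Prod>y\<in>?S. fac y x) = (\<lambda>x. if x m = a then 1 else 0)"
  proof
    fix x :: "'m \<Rightarrow> 'a"
    show "(\<Prod>y\<in>?S. fac y x) = (if x m = a then 1 else 0)"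
    proof (cases "x m = a")
      case True
      have "fac y x = 1" if "y \<in> ?S" for y
      proof -
        have d: "1 - sep y y \<noteq> 0" using sep_ne[of y] that by auto
        have "sep y 0 = 1" using group_char_0[OF sep_char] .
        then show ?thesis using True d by (simp add: fac_def)
      qed
      then show ?thesis using True by simp
    next
      case False
      then have "x m - a \<in> ?S" by simp
      moreover have "fac (x m - a) x = 0" by (simp add: fac_def)
      ultimately have "(\<Prod>y\<in>?S. fac y x) = 0" by (intro prod_zero) auto
      then show ?thesis using False by simp
    qed
  qed
  ultimately show ?thesis by simp
qed

lemma inspan_cyl:
  fixes g :: "('m \<Rightarrow> 'a::{ab_group_add,finite}) \<Rightarrow> complex"
  assumes W: "finite W" and dep: "\<And>x y. \<forall>m\<in>W. x m = y m \<Longrightarrow> g x = g y"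
  shows "inspan g"
proof -
  let ?T = "range (trunc W :: ('m \<Rightarrow> 'a) \<Rightarrow> _)"
  have T: "finite ?T" by (rule finite_trunc_range[OF W])
  have "inspan (\<lambda>x. \<Sum>t\<in>?T. g t * (\<Prod>m\<in>W. if x m = t m then 1 else 0))"
    using T W by (intro inspan_sum inspan_mult inspan_const inspan_prod inspan_ind) auto
  moreover have "(\<lambda>x. \<Sum>t\<in>?T. g t * (\<Prod>m\<in>W. if x m = t m then 1 else 0)) = g"
  proof
    fix x :: "'m \<Rightarrow> 'a"
    have tx: "trunc W x \<in> ?T" by simp
    have z: "g t * (\<Prod>m\<in>W. if x m = t m then 1 else 0) = 0" if "t \<in> ?T - {trunc W x}" for t
    proof -
      have "t \<in> ?T" using that by simp
      then obtain y where y: "t = trunc W y" by (rule rangeE)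
      have "t \<noteq> trunc W x" using that by auto
      then obtain m where "t m \<noteq> trunc W x m" by auto
      then have "m \<in> W" "x m \<noteq> t m" using y by (auto simp: trunc_def split: if_splits)
      then have "(\<Prod>m\<in>W. if x m = t m then 1 else 0) = (0::complex)"
        using W by (intro prod_zero) auto
      then show ?thesis by simp
    qed
    have "(\<Sum>t\<in>?T. g t * (\<Prod>m\<in>W. if x m = t m then 1 else 0))
        = g (trunc W x) * (\<Prod>m\<in>W. if x m = trunc W x m then 1 else 0)
          + (\<Sum>t\<in>?T - {trunc W x}. g t * (\<Prod>m\<in>W. if x m = t m then 1 else 0))"
      using sum.remove[OF T tx] by simp
    also have "(\<Sum>t\<in>?T - {trunc W x}. g t * (\<Prod>m\<in>W. if x m = t m then 1 else 0)) = 0"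
      using z by (intro sum.neutral) auto
    also have "(\<Prod>m\<in>W. if x m = trunc W x m then 1 else 0) = (1::complex)"
      by (intro prod.neutral) (auto simp: trunc_def)
    also have "g (trunc W x) = g x" by (rule dep) (auto simp: trunc_def)
    finally show "(\<Sum>t\<in>?T. g t * (\<Prod>m\<in>W. if x m = t m then 1 else 0)) = g x" by simp
  qed
  ultimately show ?thesis by simp
qed

lemma bounded_meas_integrable:
  fixes h :: "('m \<Rightarrow> 'a::{ab_group_add,finite}) \<Rightarrow> 'b::{banach,second_countable_topology}"
  assumes P: "prob_space M" and S: "sets M = sets cfg_space"
    and hm: "h \<in> borel_measurable cfg_space" and B: "\<And>x. norm (h x) \<le> B"
  shows "integrable M h"
proof -
  interpret prob_space M by (rule P)
  have "h \<in> borel_measurable M" by (subst measurable_cong_sets[OF S refl]) (rule hm)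
  then show ?thesis by (intro integrable_const_bound[where B=B]) (auto simp: B)
qed

lemma inspan_bdd:
  fixes h :: "('m \<Rightarrow> 'a::{ab_group_add,finite}) \<Rightarrow> complex"
  shows "inspan h \<Longrightarrow> h \<in> borel_measurable cfg_space \<and> (\<exists>B. \<forall>x. norm (h x) \<le> B)"
proof (induction rule: inspan.induct)
  case (base l)
  have m: "P l \<in> borel_measurable cfg_space" by (rule char_measurable[OF P_char])
  obtain c where c: "char_family c" "P l = prod_char c" using P_char[of l] unfolding characters_def by blast
  have "norm (P l x) \<le> 1" for x using prod_char_norm[OF c(1)] c(2) by simp
  then show ?case using m by blast
next
  case zero
  then show ?case by auto
next
  case (add f g)
  obtain B1 where B1: "\<forall>x. norm (f x) \<le> B1" using add.IH by blast
  obtain B2 where B2: "\<forall>x. norm (g x) \<le> B2" using add.IH by blast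
  have "norm (f x + g x) \<le> B1 + B2" for x
    using norm_triangle_ineq[of "f x" "g x"] B1 B2 by (smt (verit))
  moreover have "(\<lambda>x. f x + g x) \<in> borel_measurable cfg_space"
    using add.IH by (intro borel_measurable_add) auto
  ultimately show ?case by blast
next
  case (smult f c)
  obtain B1 where B1: "\<forall>x. norm (f x) \<le> B1" using smult.IH by blast
  have "norm (c * f x) \<le> norm c * B1" for x
    using B1 by (simp add: norm_mult mult_left_mono)
  moreover have "(\<lambda>x. c * f x) \<in> borel_measurable cfg_space"
    using smult.IH by (intro borel_measurable_times borel_measurable_const) auto
  ultimately show ?case by blast
qed

lemma inspan_integrable:
  fixes h :: "('m \<Rightarrow> 'a::{ab_group_add,finite}) \<Rightarrow> complex"
  assumes "inspan h" "prob_space M" "sets M = sets cfg_space"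
  shows "integrable M h"
proof -
  obtain B where "\<forall>x. norm (h x) \<le> B" using inspan_bdd[OF assms(1)] by blast
  then show ?thesis using inspan_bdd[OF assms(1)] assms(2,3) bounded_meas_integrable by blast
qed

lemma inspan_conv:
  fixes \<nu> :: "'i \<Rightarrow> ('m \<Rightarrow> 'a::{ab_group_add,finite}) measure"
  assumes P: "\<And>i. prob_space (\<nu> i)" and S: "\<And>i. sets (\<nu> i) = sets cfg_space"
    and conv: "\<And>l. ((\<lambda>i. integral\<^sup>L (\<nu> i) (P l)) \<longlongrightarrow> integral\<^sup>L haar (P l)) G"
  shows "inspan h \<Longrightarrow> ((\<lambda>i. integral\<^sup>L (\<nu> i) h) \<longlongrightarrow> integral\<^sup>L haar h) G"
proof (induction rule: inspan.induct)
  case (base l)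
  then show ?case by (rule conv)
next
  case zero
  then show ?case by simp
next
  case (add f g)
  have "integral\<^sup>L (\<nu> i) (\<lambda>x. f x + g x) = integral\<^sup>L (\<nu> i) f + integral\<^sup>L (\<nu> i) g" for i
    by (intro Bochner_Integration.integral_add inspan_integrable add.hyps P S)
  moreover have "integral\<^sup>L haar (\<lambda>x. f x + g x) = integral\<^sup>L haar f + integral\<^sup>L haar g"
    by (intro Bochner_Integration.integral_add inspan_integrable add.hyps prob_haar sets_haar)
  ultimately show ?case using tendsto_add[OF add.IH] by simp
next
  case (smult f c)
  then show ?case by (simp add: tendsto_mult_left)
qed

lemma approx_cyl:
  fixes f :: "('m \<Rightarrow> 'a::{ab_group_add,finite}) \<Rightarrow> real"
  assumes f: "continuous_map cfg_topology euclideanreal f" and e: "e > 0"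
  shows "\<exists>g. (\<forall>x. \<bar>f x - g x\<bar> < e) \<and> inspan (\<lambda>x. complex_of_real (g x))
             \<and> g \<in> borel_measurable cfg_space \<and> (\<exists>B. \<forall>x. \<bar>g x\<bar> \<le> B)"
proof -
  obtain W where W: "finite W" "\<forall>x y. (\<forall>m\<in>W. x m = y m) \<longrightarrow> \<bar>f x - f y\<bar> < e"
    using uniform_dep[OF f e] by (elim exE conjE)
  define g where "g x = f (trunc W x)" for x
  have ag: "\<forall>m\<in>W. x m = trunc W x m" for x :: "'m \<Rightarrow> 'a" by (simp add: trunc_def)
  have close: "\<bar>f x - g x\<bar> < e" for x unfolding g_def using W(2) ag by blast
  have dep: "g x = g y" if "\<forall>m\<in>W. x m = y m" for x y
  proof -
    have "trunc W x = trunc W y" using that by (auto simp: trunc_def)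
    then show ?thesis by (simp add: g_def)
  qed
  have sp: "inspan (\<lambda>x. complex_of_real (g x))"
    by (rule inspan_cyl[OF W(1)]) (simp add: dep)
  have gm: "g \<in> borel_measurable cfg_space"
    by (rule dep_measurable[OF W(1)]) (auto intro: dep)
  let ?B = "Max ((\<lambda>t. \<bar>f t\<bar>) ` range (trunc W :: ('m \<Rightarrow> 'a) \<Rightarrow> _))"
  have "\<bar>g x\<bar> \<le> ?B" for x
    unfolding g_def using finite_trunc_range[OF W(1)] by (intro Max_ge) auto
  then show ?thesis using close sp gm by blast
qed

lemma cont_meas_bdd:
  fixes f :: "('m \<Rightarrow> 'a::{ab_group_add,finite}) \<Rightarrow> real"
  assumes f: "continuous_map cfg_topology euclideanreal f"
  shows "f \<in> borel_measurable cfg_space \<and> (\<exists>B. \<forall>x. \<bar>f x\<bar> \<le> B)"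
proof
  have "\<forall>n. \<exists>g. (\<forall>x. \<bar>f x - g x\<bar> < 1 / real (Suc n)) \<and> g \<in> borel_measurable cfg_space"
    using approx_cyl[OF f] by (metis of_nat_0_less_iff zero_less_Suc divide_pos_pos zero_less_one)
  then obtain gs where gs: "\<forall>n. (\<forall>x. \<bar>f x - gs n x\<bar> < 1 / real (Suc n)) \<and> gs n \<in> borel_measurable cfg_space"
    by (rule choice[THEN exE]) blast
  show "f \<in> borel_measurable cfg_space"
  proof (rule borel_measurable_LIMSEQ_metric[of gs])
    show "gs i \<in> borel_measurable cfg_space" for i using gs by blast
    fix x
    have "norm (gs n x - f x) < 1 / real (Suc n)" for n
      using gs by (simp add: abs_minus_commute)
    then have "(\<lambda>n. gs n x - f x) \<longlonglongrightarrow> 0" by (rule LIMSEQ_norm_0)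
    then show "(\<lambda>n. gs n x) \<longlonglongrightarrow> f x" by (simp add: LIM_zero_iff)
  qed
next
  obtain g B where g: "\<forall>x. \<bar>f x - g x\<bar> < 1" "\<forall>x. \<bar>g x\<bar> \<le> B"
    using approx_cyl[OF f, of 1] by auto
  have "\<bar>f x\<bar> \<le> B + 1" for x using g(1)[rule_format, of x] g(2)[rule_format, of x] by linarith
  then show "\<exists>B. \<forall>x. \<bar>f x\<bar> \<le> B" by blast
qed

lemma weak_conv_from_P:
  fixes \<nu> :: "'i \<Rightarrow> ('m \<Rightarrow> 'a::{ab_group_add,finite}) measure"
  assumes P: "\<And>i. prob_space (\<nu> i)" and S: "\<And>i. sets (\<nu> i) = sets cfg_space"
    and conv: "\<And>l. ((\<lambda>i. integral\<^sup>L (\<nu> i) (P l)) \<longlongrightarrow> integral\<^sup>L haar (P l)) G"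
  shows "weak_star_conv \<nu> haar G"
  unfolding weak_star_conv_def
proof (intro allI impI)
  fix f :: "('m \<Rightarrow> 'a) \<Rightarrow> real"
  assume f: "continuous_map cfg_topology euclideanreal f"
  obtain Bf where fm: "f \<in> borel_measurable cfg_space" and Bf: "\<forall>x. \<bar>f x\<bar> \<le> Bf"
    using cont_meas_bdd[OF f] by blast
  show "((\<lambda>i. integral\<^sup>L (\<nu> i) f) \<longlongrightarrow> integral\<^sup>L haar f) G"
  proof (rule tendstoI)
    fix e :: real assume e: "e > 0"
    then have e3: "e / 3 > 0" by simp
    obtain g Bg where g: "\<forall>x. \<bar>f x - g x\<bar> < e / 3" "inspan (\<lambda>x. complex_of_real (g x))"
      "g \<in> borel_measurable cfg_space" "\<forall>x. \<bar>g x\<bar> \<le> Bg"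
      using approx_cyl[OF f e3] by blast
    have "((\<lambda>i. integral\<^sup>L (\<nu> i) (\<lambda>x. complex_of_real (g x))) \<longlongrightarrow> integral\<^sup>L haar (\<lambda>x. complex_of_real (g x))) G"
      by (rule inspan_conv[OF P S conv g(2)])
    then have "((\<lambda>i. complex_of_real (integral\<^sup>L (\<nu> i) g)) \<longlongrightarrow> complex_of_real (integral\<^sup>L haar g)) G"
      by simp
    from tendsto_Re[OF this] have "((\<lambda>i. integral\<^sup>L (\<nu> i) g) \<longlongrightarrow> integral\<^sup>L haar g) G" by simp
    then have ev: "eventually (\<lambda>i. dist (integral\<^sup>L (\<nu> i) g) (integral\<^sup>L haar g) < e / 3) G"
      using e3 by (rule tendstoD)
    have close: "\<bar>integral\<^sup>L M f - integral\<^sup>L M g\<bar> \<le> e / 3"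
      if PM: "prob_space M" and SM: "sets M = sets cfg_space" for M
    proof -
      interpret prob_space M by (rule PM)
      have intf: "integrable M f" using bounded_meas_integrable[OF PM SM fm, of Bf] Bf by simp
      have intg: "integrable M g" using bounded_meas_integrable[OF PM SM g(3), of Bg] g(4) by simp
      have "integral\<^sup>L M f - integral\<^sup>L M g = integral\<^sup>L M (\<lambda>x. f x - g x)"
        by (rule Bochner_Integration.integral_diff[OF intf intg, symmetric])
      also have "\<bar>\<dots>\<bar> \<le> integral\<^sup>L M (\<lambda>x. \<bar>f x - g x\<bar>)" by (rule integral_abs_bound)
      also have "\<dots> \<le> e / 3"
        using g(1) by (intro integral_le_const integrable_abs Bochner_Integration.integrable_diff intf intg)
          (auto intro: less_imp_le)
      finally show ?thesis .
    qed
    have c1: "\<bar>integral\<^sup>L (\<nu> i) f - integral\<^sup>L (\<nu> i) g\<bar> \<le> e / 3" for i by (rule close[OF P S])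
    have c2: "\<bar>integral\<^sup>L haar f - integral\<^sup>L haar g\<bar> \<le> e / 3" by (rule close[OF prob_haar sets_haar])
    show "eventually (\<lambda>i. dist (integral\<^sup>L (\<nu> i) f) (integral\<^sup>L haar f) < e) G"
    proof (rule eventually_mono[OF ev])
      fix i assume "dist (integral\<^sup>L (\<nu> i) g) (integral\<^sup>L haar g) < e / 3"
      then show "dist (integral\<^sup>L (\<nu> i) f) (integral\<^sup>L haar f) < e"
        using c1[of i] c2 unfolding dist_real_def by linarith
    qed
  qed
qed

definition ratio :: "nat set \<Rightarrow> nat \<Rightarrow> real" where
  "ratio J N = real (card (J \<inter> {1..N})) / real N"

lemma density_one_ratio: "density_one J \<longleftrightarrow> ratio J \<longlonglongrightarrow> 1"
  unfolding density_one_def ratio_def by (simp add: fun_eq_iff)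

lemma ratio_le1: "ratio J N \<le> 1"
proof (cases "N = 0")
  case True then show ?thesis by (simp add: ratio_def)
next
  case False
  have "card (J \<inter> {1..N}) \<le> card {1..N}" by (intro card_mono) auto
  then show ?thesis using False by (simp add: ratio_def)
qed

lemma ratio_nonneg: "0 \<le> ratio J N" by (simp add: ratio_def)

lemma ratio_mono: "A \<subseteq> B \<Longrightarrow> ratio A N \<le> ratio B N"
  unfolding ratio_def by (intro divide_right_mono) (auto intro: card_mono)

lemma ratio_int: "ratio A N + ratio B N - 1 \<le> ratio (A \<inter> B) N"
proof (cases "N = 0")
  case True then show ?thesis by (simp add: ratio_def)
next
  case False
  let ?X = "A \<inter> {1..N}" and ?Y = "B \<inter> {1..N}"
  have e1: "card (?X \<union> ?Y) + card (?X \<inter> ?Y) = card ?X + card ?Y" by (rule card_Un_Int[symmetric]) auto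
  have e2: "?X \<inter> ?Y = (A \<inter> B) \<inter> {1..N}" by auto
  have le: "card (?X \<union> ?Y) \<le> N"
    using card_mono[of "{1..N}" "?X \<union> ?Y"] by auto
  have nat: "card ?X + card ?Y \<le> N + card ((A \<inter> B) \<inter> {1..N})" using e1 le unfolding e2 by linarith
  then have "real (card ?X) + real (card ?Y) \<le> real N + real (card ((A \<inter> B) \<inter> {1..N}))"
    by (metis of_nat_add of_nat_le_iff)
  then have "real (card ?X) + real (card ?Y) - real N \<le> real (card ((A \<inter> B) \<inter> {1..N}))" by linarith
  then have "(real (card ?X) + real (card ?Y) - real N) / real N \<le> real (card ((A \<inter> B) \<inter> {1..N})) / real N"
    by (intro divide_right_mono) auto
  then show ?thesis using False by (simp add: ratio_def diff_divide_distrib add_divide_distrib)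
qed

lemma density_one_Int: "density_one A \<Longrightarrow> density_one B \<Longrightarrow> density_one (A \<inter> B)"
  unfolding density_one_ratio
proof -
  assume A: "ratio A \<longlonglongrightarrow> 1" and B: "ratio B \<longlonglongrightarrow> 1"
  have l: "(\<lambda>N. ratio A N + ratio B N - 1) \<longlonglongrightarrow> 1 + 1 - 1" by (intro tendsto_intros A B)
  show "ratio (A \<inter> B) \<longlonglongrightarrow> 1"
    by (rule tendsto_sandwich[OF _ _ l[simplified] tendsto_const]) (auto simp: ratio_int ratio_le1)
qed

lemma density_one_UNIV: "density_one UNIV"
  unfolding density_one_ratio
proof (rule tendsto_eventually)
  show "\<forall>\<^sub>F N in sequentially. ratio UNIV N = 1"
    using eventually_ge_at_top[of "1::nat"] by eventually_elim (simp add: ratio_def)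
qed

lemma diag:
  fixes Jk :: "nat \<Rightarrow> nat set"
  assumes d: "\<And>k. density_one (Jk k)"
  shows "\<exists>J. density_one J \<and> (\<forall>k. finite (J - Jk k))"
proof -
  define I where "I k = {j. \<forall>i\<le>k. j \<in> Jk i}" for k
  have Isuc: "I (Suc k) = I k \<inter> Jk (Suc k)" for k by (auto simp: I_def le_Suc_eq)
  have dI: "density_one (I k)" for k
  proof (induction k)
    case 0
    have "I 0 = Jk 0" by (auto simp: I_def)
    then show ?case using d by simp
  next
    case (Suc k)
    then show ?case unfolding Isuc using d by (intro density_one_Int)
  qed
  have Imono: "I k \<subseteq> I k'" if "k' \<le> k" for k k' using that by (auto simp: I_def)
  have IJ: "I k \<subseteq> Jk k" for k by (auto simp: I_def)
  have "\<exists>M. \<forall>N\<ge>M. 1 - 1 / real (Suc k) < ratio (I k) N" for k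
  proof -
    have "ratio (I k) \<longlonglongrightarrow> 1" using dI density_one_ratio by blast
    moreover have "(0::real) < 1 / real (Suc k)" by simp
    ultimately have "eventually (\<lambda>N. dist (ratio (I k) N) 1 < 1 / real (Suc k)) sequentially"
      by (rule tendstoD)
    then obtain M where "\<forall>N\<ge>M. dist (ratio (I k) N) 1 < 1 / real (Suc k)"
      unfolding eventually_sequentially by blast
    then show ?thesis unfolding dist_real_def by (intro exI[of _ M]) force
  qed
  then have "\<forall>k. \<exists>M. \<forall>N\<ge>M. 1 - 1 / real (Suc k) < ratio (I k) N" by blast
  then obtain M where M: "\<forall>k. \<forall>N\<ge>M k. 1 - 1 / real (Suc k) < ratio (I k) N"
    by (rule choice[THEN exE]) blast
  define Ns where "Ns = rec_nat (M 0) (\<lambda>k n. max (Suc n) (M (Suc k)))"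
  have Ns0: "Ns 0 = M 0" and NsS: "Ns (Suc k) = max (Suc (Ns k)) (M (Suc k))" for k
    by (simp_all add: Ns_def)
  have NsM: "M k \<le> Ns k" for k by (cases k) (simp_all add: Ns0 NsS)
  have smono: "strict_mono Ns" by (rule strict_monoI_Suc) (simp add: NsS)
  have Nsk: "k \<le> Ns k" for k using smono by (rule strict_mono_imp_increasing)
  define J where "J = {j. \<forall>k. Ns k \<le> j \<longrightarrow> j \<in> I k}"
  have fin: "finite (J - Jk k)" for k
  proof (rule finite_subset[of _ "{..<Ns k}"])
    show "J - Jk k \<subseteq> {..<Ns k}"
    proof
      fix j assume "j \<in> J - Jk k"
      then show "j \<in> {..<Ns k}" using IJ[of k] by (auto simp: J_def not_le[symmetric])
    qed
  qed simp
  have "ratio J \<longlonglongrightarrow> 1"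
  proof (rule LIMSEQ_I)
    fix r :: real assume r: "r > 0"
    obtain K where K: "inverse (real (Suc K)) < r" using reals_Archimedean[OF r] by blast
    show "\<exists>no. \<forall>N\<ge>no. norm (ratio J N - 1) < r"
    proof (intro exI allI impI)
      fix N assume N: "Ns K \<le> N"
      define S where "S = {k. Ns k \<le> N}"
      have "S \<subseteq> {..N}"
      proof
        fix k assume "k \<in> S"
        then have "Ns k \<le> N" by (simp add: S_def)
        then show "k \<in> {..N}" using Nsk[of k] by simp
      qed
      then have finS: "finite S" by (rule finite_subset) simp
      have KS: "K \<in> S" using N by (simp add: S_def)
      define k where "k = Max S"
      have kS: "k \<in> S" unfolding k_def using finS KS by (intro Max_in) auto
      have Kk: "K \<le> k" unfolding k_def using finS KS by (rule Max_ge)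
      have big: "k' \<le> k" if "Ns k' \<le> N" for k'
        unfolding k_def using finS that by (intro Max_ge) (auto simp: S_def)
      have sub: "I k \<inter> {1..N} \<subseteq> J"
      proof
        fix j assume j: "j \<in> I k \<inter> {1..N}"
        show "j \<in> J" unfolding J_def
        proof (intro CollectI allI impI)
          fix k' assume "Ns k' \<le> j"
          then have "k' \<le> k" using big j by simp
          then show "j \<in> I k'" using Imono j by blast
        qed
      qed
      have "ratio (I k) N = ratio (I k \<inter> {1..N}) N" unfolding ratio_def by (simp add: Int_assoc)
      also have "\<dots> \<le> ratio J N" by (rule ratio_mono[OF sub])
      finally have r1: "ratio (I k) N \<le> ratio J N" .
      have "M k \<le> N" using NsM[of k] kS by (simp add: S_def)
      then have r2: "1 - 1 / real (Suc k) < ratio (I k) N" using M by blast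
      have "1 / real (Suc k) \<le> 1 / real (Suc K)" using Kk by (intro divide_left_mono) auto
      then have "1 / real (Suc k) < r" using K by (simp add: inverse_eq_divide)
      then show "norm (ratio J N - 1) < r" using r1 r2 ratio_le1[of J N] by simp
    qed
  qed
  then show ?thesis using fin density_one_ratio by blast
qed


lemma sum_if_card:
  assumes "finite A"
  shows "(\<Sum>n\<in>A. if Q n then 1 else 0 :: real) = real (card {n\<in>A. Q n})"
proof -
  have "(\<Sum>n\<in>A. if Q n then 1 else 0 :: real) = (\<Sum>n\<in>{n\<in>A. Q n}. 1)"
    using sum.inter_filter[OF assms, of "\<lambda>_. 1::real" Q] by simp
  also have "\<dots> = real (card {n\<in>A. Q n})" by simp
  finally show ?thesis .
qed

lemma cesaro:
  fixes a :: "nat \<Rightarrow> real"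
  assumes dens: "density_one J" and conv: "(a \<longlongrightarrow> L) (sequentially \<sqinter> principal J)"
    and bnd: "\<And>n. \<bar>a n\<bar> \<le> B"
  shows "(\<lambda>N. (\<Sum>n=1..N. a n) / real N) \<longlonglongrightarrow> L"
proof (rule LIMSEQ_I)
  fix r :: real assume r: "r > 0"
  define C where "C = B + \<bar>L\<bar>"
  have C: "\<bar>a n - L\<bar> \<le> C" for n using bnd[of n] unfolding C_def by linarith
  have C0: "0 \<le> C" using bnd[of 0] unfolding C_def by linarith
  have "eventually (\<lambda>n. dist (a n) L < r / 3) (sequentially \<sqinter> principal J)"
    using conv by (rule tendstoD) (use r in simp)
  then obtain K where K: "\<forall>n\<ge>K. n \<in> J \<longrightarrow> \<bar>a n - L\<bar> < r / 3"
    unfolding eventually_inf_principal eventually_sequentially dist_real_def by blast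
  have rJ: "ratio J \<longlonglongrightarrow> 1" using dens density_one_ratio by blast
  have pos: "0 < r / (3 * (C + 1))" using r C0 by simp
  have "eventually (\<lambda>N. dist (ratio J N) 1 < r / (3 * (C + 1))) sequentially"
    using rJ pos by (rule tendstoD)
  then obtain N1 where N1: "\<forall>N\<ge>N1. 1 - ratio J N < r / (3 * (C + 1))"
    unfolding eventually_sequentially dist_real_def by (metis abs_minus_commute abs_less_iff)
  obtain N2 :: nat where N2: "3 * C * real K / r < real N2" using reals_Archimedean2 by blast
  show "\<exists>no. \<forall>N\<ge>no. norm ((\<Sum>n=1..N. a n) / real N - L) < r"
  proof (intro exI allI impI)
    fix N assume N: "max (max N1 N2) 1 \<le> N"
    then have N1': "N1 \<le> N" and N2': "N2 \<le> N" and Npos: "0 < N" by auto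
    then have Nr: "0 < real N" by simp
    have pw: "\<bar>a n - L\<bar> \<le> r / 3 + C * ((if n < K then 1 else 0) + (if n \<notin> J then 1 else 0))" for n
    proof (cases "n < K \<or> n \<notin> J")
      case True
      have "C \<le> C * ((if n < K then 1 else 0) + (if n \<notin> J then 1 else 0))"
        using True C0 by auto
      then show ?thesis using C[of n] r by linarith
    next
      case False
      then have "\<bar>a n - L\<bar> < r / 3" using K by auto
      then show ?thesis using False by simp
    qed
    let ?A = "{1..N}"
    have "(\<Sum>n\<in>?A. \<bar>a n - L\<bar>) \<le> (\<Sum>n\<in>?A. r / 3 + C * ((if n < K then 1 else 0) + (if n \<notin> J then 1 else 0)))"
      by (intro sum_mono pw)
    also have "\<dots> = real N * (r / 3) + C * ((\<Sum>n\<in>?A. if n < K then 1 else 0) + (\<Sum>n\<in>?A. if n \<notin> J then 1 else 0))"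
      by (simp add: sum.distrib sum_distrib_left[symmetric])
    also have "(\<Sum>n\<in>?A. if n < K then 1 else 0 :: real) = real (card {n\<in>?A. n < K})"
      by (rule sum_if_card) simp
    also have "(\<Sum>n\<in>?A. if n \<notin> J then 1 else 0 :: real) = real (card {n\<in>?A. n \<notin> J})"
      by (rule sum_if_card) simp
    finally have S1: "(\<Sum>n\<in>?A. \<bar>a n - L\<bar>) \<le> real N * (r / 3) + C * (real (card {n\<in>?A. n < K}) + real (card {n\<in>?A. n \<notin> J}))" .
    have cK: "card {n\<in>?A. n < K} \<le> K"
      using card_mono[of "{..<K}" "{n\<in>?A. n < K}"] by auto
    have eqJ: "{n\<in>?A. n \<notin> J} = ?A - (J \<inter> ?A)" by auto
    have "card {n\<in>?A. n \<notin> J} = card ?A - card (J \<inter> ?A)"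
      unfolding eqJ by (rule card_Diff_subset) auto
    moreover have "card (J \<inter> ?A) \<le> card ?A" by (intro card_mono) auto
    ultimately have cJ: "real (card {n\<in>?A. n \<notin> J}) = real N - real (card (J \<inter> ?A))"
      by (simp add: of_nat_diff)
    have S2: "(\<Sum>n\<in>?A. \<bar>a n - L\<bar>) \<le> real N * (r / 3) + C * real K + C * (real N - real (card (J \<inter> ?A)))"
    proof -
      have "real (card {n\<in>?A. n < K}) \<le> real K" using cK by simp
      then have m1: "C * real (card {n\<in>?A. n < K}) \<le> C * real K" using C0 by (rule mult_left_mono)
      have "C * (real (card {n\<in>?A. n < K}) + real (card {n\<in>?A. n \<notin> J}))
          = C * real (card {n\<in>?A. n < K}) + C * (real N - real (card (J \<inter> ?A)))"
        unfolding cJ by (simp add: distrib_left)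
      then show ?thesis using S1 m1 by linarith
    qed
    have "(\<Sum>n=1..N. a n) / real N - L = (\<Sum>n\<in>?A. a n - L) / real N"
      using Nr by (simp add: sum_subtractf field_simps)
    then have "norm ((\<Sum>n=1..N. a n) / real N - L) = \<bar>\<Sum>n\<in>?A. a n - L\<bar> / real N"
      using Nr by simp
    also have "\<dots> \<le> (\<Sum>n\<in>?A. \<bar>a n - L\<bar>) / real N"
      using Nr by (intro divide_right_mono sum_abs) auto
    also have "\<dots> \<le> (real N * (r / 3) + C * real K + C * (real N - real (card (J \<inter> ?A)))) / real N"
      using Nr S2 by (intro divide_right_mono) auto
    also have "\<dots> = r / 3 + C * real K / real N + C * (1 - ratio J N)"
      using Nr by (simp add: ratio_def field_simps)
    also have "\<dots> < r"
    proof -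
      have t1: "C * real K / real N < r / 3"
      proof -
        have "3 * C * real K < r * real N2" using N2 r by (simp add: field_simps)
        also have "\<dots> \<le> r * real N" using N2' r by simp
        finally have "C * real K < r / 3 * real N" by simp
        then show ?thesis using Nr by (simp add: field_simps)
      qed
      have "1 - ratio J N < r / (3 * (C + 1))" using N1 N1' by blast
      then have "C * (1 - ratio J N) \<le> C * (r / (3 * (C + 1)))" using C0 by (intro mult_left_mono) auto
      also have "\<dots> < r / 3"
      proof -
        have "C * (r / (3 * (C + 1))) = (r / 3) * (C / (C + 1))" using C0 by (simp add: field_simps)
        also have "\<dots> < (r / 3) * 1" using r C0 by (intro mult_strict_left_mono) auto
        finally show ?thesis by simp
      qed
      finally show ?thesis using t1 by linarith
    qed
    finally show "norm ((\<Sum>n=1..N. a n) / real N - L) < r" .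
  qed
qed

lemma char_conv:
  fixes F :: "('m::monoid_mult \<Rightarrow> 'a::{ab_group_add,finite}) \<Rightarrow> ('m \<Rightarrow> 'a)"
  assumes F: "is_LCA F" and hm: "harmonically_mixing \<mu>" and ch: "ch \<in> characters"
    and lim: "filterlim (\<lambda>j. char_rank (ch \<circ> (F ^^ j))) at_top G"
  shows "((\<lambda>j. integral\<^sup>L \<mu> (ch \<circ> (F ^^ j))) \<longlongrightarrow> 0) G"
proof (rule tendstoI)
  fix e :: real assume e: "e > 0"
  obtain R where R: "\<forall>ch\<in>characters. char_rank ch > R \<longrightarrow> norm (LINT x|\<mu>. ch x) < e"
    using hm e unfolding harmonically_mixing_def by blast
  have ev: "eventually (\<lambda>j. Suc R \<le> char_rank (ch \<circ> (F ^^ j))) G"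
    using lim unfolding filterlim_at_top by blast
  show "eventually (\<lambda>j. dist (integral\<^sup>L \<mu> (ch \<circ> (F ^^ j))) 0 < e) G"
  proof (rule eventually_mono[OF ev])
    fix j assume "Suc R \<le> char_rank (ch \<circ> (F ^^ j))"
    then have "char_rank (ch \<circ> (F ^^ j)) > R" by simp
    then have "norm (LINT x|\<mu>. (ch \<circ> (F ^^ j)) x) < e"
      using R char_comp_LCA[OF F ch, of j] by blast
    then show "dist (integral\<^sup>L \<mu> (ch \<circ> (F ^^ j))) 0 < e" by (simp add: comp_def)
  qed
qed

lemma P_conv:
  fixes F :: "('m::monoid_mult \<Rightarrow> 'a::{ab_group_add,finite}) \<Rightarrow> ('m \<Rightarrow> 'a)"
  assumes F: "is_LCA F" and Pm: "prob_space \<mu>" and S: "sets \<mu> = sets cfg_space"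
    and hm: "harmonically_mixing \<mu>"
    and lim: "P l \<noteq> (\<lambda>_. 1) \<Longrightarrow> filterlim (\<lambda>j. char_rank (P l \<circ> (F ^^ j))) at_top G"
  shows "((\<lambda>j. integral\<^sup>L (push F j \<mu>) (P l)) \<longlongrightarrow> integral\<^sup>L haar (P l)) G"
proof (cases "P l = (\<lambda>_. 1)")
  case True
  have "integral\<^sup>L (push F j \<mu>) (P l) = 1" for j
  proof -
    interpret prob_space "push F j \<mu>" by (rule push_prob[OF F Pm S])
    show ?thesis using True by (simp add: prob_space)
  qed
  moreover have "integral\<^sup>L haar (P l) = 1" using haar_char[OF P_char, of l] True by simp
  ultimately show ?thesis by simp
next
  case False
  have eq: "integral\<^sup>L (push F j \<mu>) (P l) = integral\<^sup>L \<mu> (P l \<circ> (F ^^ j))" for j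
    using push_integral[OF F S char_measurable[OF P_char]] by (simp add: o_def)
  have "((\<lambda>j. integral\<^sup>L \<mu> (P l \<circ> (F ^^ j))) \<longlongrightarrow> 0) G"
    by (rule char_conv[OF F hm P_char lim[OF False]])
  moreover have "integral\<^sup>L haar (P l) = 0" using haar_char[OF P_char, of l] False by simp
  ultimately show ?thesis unfolding eq by simp
qed

lemma push_f_bound:
  fixes F :: "('m::monoid_mult \<Rightarrow> 'a::{ab_group_add,finite}) \<Rightarrow> ('m \<Rightarrow> 'a)"
    and f :: "('m \<Rightarrow> 'a) \<Rightarrow> real"
  assumes F: "is_LCA F" and Pm: "prob_space \<mu>" and S: "sets \<mu> = sets cfg_space"
    and fm: "f \<in> borel_measurable cfg_space" and Bf: "\<forall>x. \<bar>f x\<bar> \<le> Bf"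
  shows "\<bar>integral\<^sup>L (push F n \<mu>) f\<bar> \<le> Bf"
proof -
  interpret prob_space "push F n \<mu>" by (rule push_prob[OF F Pm S])
  have intf: "integrable (push F n \<mu>) f"
    using bounded_meas_integrable[OF push_prob[OF F Pm S, of n] push_sets[of F n \<mu>] fm, of Bf] Bf by simp
  have "\<bar>integral\<^sup>L (push F n \<mu>) f\<bar> \<le> integral\<^sup>L (push F n \<mu>) (\<lambda>x. \<bar>f x\<bar>)" by (rule integral_abs_bound)
  also have "\<dots> \<le> Bf" using Bf by (intro integral_le_const integrable_abs intf) auto
  finally show ?thesis .
qed

theorem mainTheorem9:
  fixes F :: "('m::{monoid_mult,countable} \<Rightarrow> 'a::{ab_group_add,finite}) \<Rightarrow> ('m \<Rightarrow> 'a)"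
    and \<mu> :: "('m \<Rightarrow> 'a) measure"
  assumes "is_LCA F"
    and "prob_space \<mu>" and "sets \<mu> = sets cfg_space"
    and "harmonically_mixing \<mu>"
  shows "(diffusive F \<longrightarrow> weak_star_conv (\<lambda>j. push F j \<mu>) haar sequentially)
       \<and> (diffusive_in_density F \<longrightarrow>
            (\<exists>J. density_one J \<and> weak_star_conv (\<lambda>j. push F j \<mu>) haar (sequentially \<sqinter> principal J))
          \<and> (\<forall>f. continuous_map cfg_topology euclideanreal f \<longrightarrow>
               (\<lambda>N. (\<Sum>n=1..N. integral\<^sup>L (push F n \<mu>) f) / real N) \<longlonglongrightarrow> integral\<^sup>L haar f))"
proof (intro conjI impI)
  note F = assms(1) and Pm = assms(2) and S = assms(3) and hm = assms(4)
  have Pj: "\<And>j. prob_space (push F j \<mu>)" by (rule push_prob[OF F Pm S])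
  have Sj: "\<And>j. sets (push F j \<mu>) = sets cfg_space" by (rule push_sets)
  {
    assume d: "diffusive F"
    show "weak_star_conv (\<lambda>j. push F j \<mu>) haar sequentially"
    proof (rule weak_conv_from_P[OF Pj Sj])
      fix l :: "('m \<times> 'a) list"
      show "((\<lambda>j. integral\<^sup>L (push F j \<mu>) (P l)) \<longlongrightarrow> integral\<^sup>L haar (P l)) sequentially"
        by (rule P_conv[OF F Pm S hm]) (use d P_char in \<open>auto simp: diffusive_def\<close>)
    qed
  }
  assume dd: "diffusive_in_density F"
  have "\<exists>J. density_one J \<and> (P l \<noteq> (\<lambda>_. 1) \<longrightarrow>
          filterlim (\<lambda>j. char_rank (P l \<circ> (F ^^ j))) at_top (sequentially \<sqinter> principal J))"
    for l :: "('m \<times> 'a) list"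
  proof (cases "P l = (\<lambda>_. 1)")
    case True
    then show ?thesis using density_one_UNIV by blast
  next
    case False
    then show ?thesis using dd P_char[of l] unfolding diffusive_in_density_def by blast
  qed
  then have "\<forall>l::('m \<times> 'a) list. \<exists>J. density_one J \<and> (P l \<noteq> (\<lambda>_. 1) \<longrightarrow>
          filterlim (\<lambda>j. char_rank (P l \<circ> (F ^^ j))) at_top (sequentially \<sqinter> principal J))" by blast
  then obtain Jl where Jl: "\<forall>l::('m \<times> 'a) list. density_one (Jl l) \<and> (P l \<noteq> (\<lambda>_. 1) \<longrightarrow>
          filterlim (\<lambda>j. char_rank (P l \<circ> (F ^^ j))) at_top (sequentially \<sqinter> principal (Jl l)))"
    by (rule choice[THEN exE]) blast
  define Jk where "Jk k = Jl (from_nat k :: ('m \<times> 'a) list)" for k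
  have "\<exists>J. density_one J \<and> (\<forall>k. finite (J - Jk k))"
    by (rule diag) (use Jl in \<open>simp add: Jk_def\<close>)
  then obtain J where J: "density_one J" "\<forall>k. finite (J - Jk k)" by blast
  have finl: "finite (J - Jl l)" for l :: "('m \<times> 'a) list"
    using J(2)[rule_format, of "to_nat l"] by (simp add: Jk_def)
  have fle: "sequentially \<sqinter> principal J \<le> sequentially \<sqinter> principal (Jl l)" for l :: "('m \<times> 'a) list"
  proof -
    obtain N where N: "J - Jl l \<subseteq> {..<N}" using finite_nat_bounded[OF finl[of l]] by blast
    have "eventually (\<lambda>j. j \<in> Jl l) (sequentially \<sqinter> principal J)"
      unfolding eventually_inf_principal eventually_sequentially
      using N by (intro exI[of _ N]) auto
    then have "sequentially \<sqinter> principal J \<le> principal (Jl l)" by (simp add: le_principal)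
    then show ?thesis by (simp add: inf.coboundedI1)
  qed
  have wsJ: "weak_star_conv (\<lambda>j. push F j \<mu>) haar (sequentially \<sqinter> principal J)"
  proof (rule weak_conv_from_P[OF Pj Sj])
    fix l :: "('m \<times> 'a) list"
    show "((\<lambda>j. integral\<^sup>L (push F j \<mu>) (P l)) \<longlongrightarrow> integral\<^sup>L haar (P l)) (sequentially \<sqinter> principal J)"
    proof (rule P_conv[OF F Pm S hm])
      assume "P l \<noteq> (\<lambda>_. 1)"
      then have "filterlim (\<lambda>j. char_rank (P l \<circ> (F ^^ j))) at_top (sequentially \<sqinter> principal (Jl l))"
        using Jl by blast
      then show "filterlim (\<lambda>j. char_rank (P l \<circ> (F ^^ j))) at_top (sequentially \<sqinter> principal J)"
        by (rule filterlim_mono[OF _ order_refl fle])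
    qed
  qed
  show "\<exists>J. density_one J \<and> weak_star_conv (\<lambda>j. push F j \<mu>) haar (sequentially \<sqinter> principal J)"
    using J(1) wsJ by blast
  show "\<forall>f. continuous_map cfg_topology euclideanreal f \<longrightarrow>
          (\<lambda>N. (\<Sum>n=1..N. integral\<^sup>L (push F n \<mu>) f) / real N) \<longlonglongrightarrow> integral\<^sup>L haar f"
  proof (intro allI impI)
    fix f :: "('m \<Rightarrow> 'a) \<Rightarrow> real"
    assume f: "continuous_map cfg_topology euclideanreal f"
    obtain Bf where fm: "f \<in> borel_measurable cfg_space" and Bf: "\<forall>x. \<bar>f x\<bar> \<le> Bf"
      using cont_meas_bdd[OF f] by blast
    have conv: "((\<lambda>n. integral\<^sup>L (push F n \<mu>) f) \<longlongrightarrow> integral\<^sup>L haar f) (sequentially \<sqinter> principal J)"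
      using wsJ f unfolding weak_star_conv_def by blast
    show "(\<lambda>N. (\<Sum>n=1..N. integral\<^sup>L (push F n \<mu>) f) / real N) \<longlonglongrightarrow> integral\<^sup>L haar f"
      by (rule cesaro[OF J(1) conv push_f_bound[OF F Pm S fm Bf]])
  qed
qed

end
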